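(* Let $f:\mathfrak X\times\mathbb R\to\mathbb R^{r_1}\times\mathbb C^{r_2}$ be as in the context. Then: (i) For each $\alpha\in\mathfrak I$, let $\alpha_1,\dots,\alpha_{r_2}\in\mathbb R$ be such that $\alpha_j\le\Omega_j(\kappa)\le\alpha_j+1$ for all $\kappa\in\mathfrak X_\alpha$ (such numbers exist). Then $$f(\mathfrak X_\alpha\times\mathbb R)\subset\mathcal H_\alpha:=\mathbb R_+^{r_1}\times H\big(\tfrac{\alpha_1+1/2}{N_1}\big)\times\cdots\times H\big(\tfrac{\alpha_{r_2}+1/2}{N_{r_2}}\big),$$ where $H(t)=\{\rho e^{2\pi i(t+\theta)}:\rho>0,\ \theta\in(-1/4,1/4)\}$. In particular $f(\mathfrak X\times\mathbb R)\subset\mathbb R_+^{r_1}\times(\mathbb C^* )^{r_2}$. (ii) If $v_0,\dots,v_{n-1}$ are the vertices of $\mathfrak X_\alpha$ and $w_i:=f(v_i\times0)\in k$, then $f(\mathfrak X_\alpha\times\mathbb R)=\{\sum_{i=0}^{n-1}t_iw_i: t_i\ge0\}\setminus\{0\}$. (iii) If $x,x'\in\mathfrak X$, $\lambda\in\Lambda$ with $x'=x+\lambda$, and $y\in\mathbb R$, then $f(x'\times y)=\varepsilon(\lambda)f(x\times y)$, where $\varepsilon(\lambda):=\prod_{\ell=1}^r\varepsilon_\ell^{\lambda[\ell]}$.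
   Context: Number field setup: $k$ is a number field of degree $n=r_1+2r_2$ with real embeddings $\tau_1,\dots,\tau_{r_1}$ and complex embeddings $\tau_{r_1+1},\dots,\tau_{r_1+r_2}$ (one from each conjugate pair). We identify $\gamma\in k$ with $(\gamma^{(i)})_i\in\mathbb R^{r_1}\times\mathbb C^{r_2}$, $\gamma^{(i)}=\tau_i(\gamma)$; this ring has componentwise operations. $r=r_1+r_2-1$; $\varepsilon_1,\dots,\varepsilon_r$ are multiplicatively independent totally positive units; $N_j\ge3$ integers; $\arg\in(-\pi,\pi]$; $\Lambda:=\mathbb Z^r\times N_1\mathbb Z\times\cdots\times N_{r_2}\mathbb Z\subset\mathbb R^{n-1}$; $\Omega_j(\kappa):=\kappa[r+j]+\frac{N_j}{2\pi}\sum_{\ell=1}^r\kappa[\ell]\arg(\varepsilon_\ell^{(r_1+j)})$. The complex $\mathfrak X=\bigcup_{\alpha\in\mathfrak I}\mathfrak X_\alpha\subset\mathbb R^{n-1}$ is a simplicial complex of $(n-1)$-simplices with integral vertices, constructed as follows. For an ordered $p$-complex $X=\bigcup X_\alpha\subset V$ (simplices with total orders $\prec_\alpha$ on vertices), linear $\omega:V\to\mathbb R$ and integers $M_1<M_2$, let $A:V\to(0,1]$ with $A(u)-\omega(u)\in\mathbb Z$, $a(u)=A(u)-\omega(u)$, order $u\prec_\alpha^Au'$ iff $A(u)<A(u')$ or ($A(u)=A(u')$ and $u\prec_\alpha u'$); for $\gamma=(\alpha,v,\ell)$ with $v$ a vertex of $X_\alpha$ and $M_1\le\ell<M_2$ an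 integer, list vertices $v_0\prec_\alpha^A\cdots\prec_\alpha^Av_p$ with $v=v_j$, and let $Y_\gamma$ be the convex hull of $v_i\times(a(v_i)+\ell)$ ($i\le j$) and $v_i\times(a(v_i)+\ell-1)$ ($i\ge j$), ordered by $\rho\prec_\gamma\rho'$ iff $\pi_V(\rho)\prec_\alpha\pi_V(\rho')$ or ($\pi_V(\rho)=\pi_V(\rho')$ and the last coordinate of $\rho'$ is smaller); $Y(X,\omega,[M_1,M_2])=\bigcup_\gamma Y_\gamma$. Then $X_0=\{0\}\subset\mathbb R^0$, $X_j=Y(X_{j-1},0,[0,1])$ for $1\le j\le r$, $X_{r+j}=Y(X_{r+j-1},\omega_{r+j-1},[0,N_j])$ for $1\le j\le r_2$ with $\omega_{r+j-1}(x)=\frac{N_j}{2\pi}\sum_{\ell=1}^rx[\ell]\arg(\varepsilon_\ell^{(r_1+j)})$, and $\mathfrak X:=X_{n-1}$. Twister: $\beta:\mathbb Z^{n-1}\to k^*$ with each $\beta(x)$ totally positive; for each $1\le j\le r_2$ there is $t_j(x)$ with $|t_j(x)|/N_j<\frac14-\frac1{2N_j}$ and $\beta(x)^{(r_1+j)}/|\beta(x)^{(r_1+j)}|=\exp(2\pi i(x[r+j]+t_j(x))/N_j)$; $\beta(x+\lambda)=\beta(x)$ for $\lambda\in\Lambda$. The map $f$: for a vertex $v\in\mathbb Z^{n-1}$ set $\tilde f(v)=\beta(v)\prod_{\ell=1}^r\varepsilon_\ell^{v[\ell]}\in k^*$; let $A:\mathfrak X\to\mathbb R^{r_1}\times\mathbb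 C^{r_2}$ be the continuous map that is affine on each $\mathfrak X_\alpha$ and equals $\tilde f$ on vertices; $f(x\times y):=e^yA(x)$ for $x\in\mathfrak X$, $y\in\mathbb R$. *)

theory Defs
  imports "HOL-Analysis.Analysis" "HOL-Computational_Algebra.Polynomial"
begin

text \<open>k is modelled as an abstract field of characteristic 0 ('a).
  tau i (1 \<le> i \<le> r1+r2) are the embeddings into C: tau 1..tau r1 real,
  tau (r1+1)..tau (r1+r2) complex, one from each conjugate pair.\<close>

definition is_ring_hom_C :: "('a::field_char_0 \<Rightarrow> complex) \<Rightarrow> bool" where
  "is_ring_hom_C s \<longleftrightarrow> (\<forall>x y. s (x + y) = s x + s y) \<and> (\<forall>x y. s (x * y) = s x * s y) \<and> s 1 = 1"

definition number_field_emb :: "nat \<Rightarrow> nat \<Rightarrow> (nat \<Rightarrow> 'a::field_char_0 \<Rightarrow> complex) \<Rightarrow> bool" where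
  "number_field_emb r1 r2 tau \<longleftrightarrow>
     \<comment> \<open>k has degree n = r1 + 2 r2 over Q\<close>
     (\<exists>b :: nat \<Rightarrow> 'a.
        (\<forall>x. \<exists>q :: nat \<Rightarrow> rat. x = (\<Sum>i<r1 + 2*r2. of_rat (q i) * b i)) \<and>
        (\<forall>q :: nat \<Rightarrow> rat. (\<Sum>i<r1 + 2*r2. of_rat (q i) * b i) = 0 \<longrightarrow> (\<forall>i<r1 + 2*r2. q i = 0))) \<and>
     (\<forall>i\<in>{1..r1+r2}. is_ring_hom_C (tau i)) \<and>
     (\<forall>i\<in>{1..r1}. \<forall>x. tau i x \<in> \<real>) \<and>
     (\<forall>i\<in>{r1+1..r1+r2}. \<exists>x. tau i x \<notin> \<real>) \<and>
     (\<forall>i\<in>{1..r1+r2}. \<forall>j\<in>{1..r1+r2}. i \<noteq> j \<longrightarrow> tau i \<noteq> tau j \<and> tau i \<noteq> (cnj \<circ> tau j)) \<and>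
     (\<forall>s. is_ring_hom_C s \<longrightarrow> (\<exists>i\<in>{1..r1+r2}. s = tau i \<or> s = cnj \<circ> tau i))"

definition nf_unit :: "'a::field_char_0 \<Rightarrow> bool" where
  "nf_unit e \<longleftrightarrow> e \<noteq> 0 \<and> algebraic_int e \<and> algebraic_int (inverse e)"

definition totally_positive :: "nat \<Rightarrow> (nat \<Rightarrow> 'a::field_char_0 \<Rightarrow> complex) \<Rightarrow> 'a \<Rightarrow> bool" where
  "totally_positive r1 tau x \<longleftrightarrow> x \<noteq> 0 \<and> (\<forall>i\<in>{1..r1}. tau i x \<in> \<real> \<and> Re (tau i x) > 0)"

text \<open>The identification k \<subseteq> R^r1 x C^r2: coordinates indexed 1..r1+r2 (0 elsewhere).\<close>
definition emb :: "nat \<Rightarrow> nat \<Rightarrow> (nat \<Rightarrow> 'a \<Rightarrow> complex) \<Rightarrow> 'a \<Rightarrow> (nat \<Rightarrow> complex)" where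
  "emb r1 r2 tau g = (\<lambda>i. if i \<in> {1..r1+r2} then tau i g else 0)"

text \<open>Points of R^m are functions nat \<Rightarrow> real with coordinates x[1..m], zero elsewhere.\<close>

definition int_points :: "nat \<Rightarrow> (nat \<Rightarrow> int) set" where
  "int_points m = {x. \<forall>l. (l = 0 \<or> l > m) \<longrightarrow> x l = 0}"

definition Lattice :: "nat \<Rightarrow> nat \<Rightarrow> (nat \<Rightarrow> nat) \<Rightarrow> (nat \<Rightarrow> int) set" where
  "Lattice r r2 N = {x \<in> int_points (r + r2). \<forall>j\<in>{1..r2}. int (N j) dvd x (r + j)}"

definition eps_pow :: "nat \<Rightarrow> (nat \<Rightarrow> 'a::field_char_0) \<Rightarrow> (nat \<Rightarrow> int) \<Rightarrow> 'a" where
  "eps_pow r eps x = (\<Prod>l\<in>{1..r}. eps l powi x l)"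

definition twister :: "nat \<Rightarrow> nat \<Rightarrow> (nat \<Rightarrow> 'a::field_char_0 \<Rightarrow> complex) \<Rightarrow> (nat \<Rightarrow> nat)
    \<Rightarrow> ((nat \<Rightarrow> int) \<Rightarrow> 'a) \<Rightarrow> bool" where
  "twister r1 r2 tau N beta \<longleftrightarrow>
     (let r = r1 + r2 - 1 in
       (\<forall>x\<in>int_points (r + r2). totally_positive r1 tau (beta x)) \<and>
       (\<forall>x\<in>int_points (r + r2). \<forall>j\<in>{1..r2}. \<exists>t::real.
           \<bar>t\<bar> / real (N j) < 1/4 - 1 / (2 * real (N j)) \<and>
           tau (r1 + j) (beta x) / complex_of_real (cmod (tau (r1 + j) (beta x)))
             = exp (2 * complex_of_real pi * \<i> * complex_of_real ((real_of_int (x (r + j)) + t) / real (N j)))) \<and>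
       (\<forall>x\<in>int_points (r + r2). \<forall>lam\<in>Lattice r r2 N. beta (\<lambda>l. x l + lam l) = beta x))"

text \<open>An ordered simplex is a list of its (integral) vertices in increasing order;
  a vertex of R^m is an int list of length m (its coordinates x[1],...,x[m]).\<close>

type_synonym vertex = "int list"
type_synonym osimplex = "vertex list"

definition Acoord :: "(vertex \<Rightarrow> real) \<Rightarrow> vertex \<Rightarrow> real" where
  "Acoord \<omega> u = \<omega> u - of_int \<lceil>\<omega> u\<rceil> + 1"    \<comment> \<open>the unique A(u) \<in> (0,1] with A(u) - \<omega>(u) \<in> Z\<close>

definition acoord :: "(vertex \<Rightarrow> real) \<Rightarrow> vertex \<Rightarrow> int" where
  "acoord \<omega> u = 1 - \<lceil>\<omega> u\<rceil>"                \<comment> \<open>a(u) = A(u) - \<omega>(u)\<close>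

text \<open>Position of the i-th vertex of S in the order \<prec>^A.\<close>
definition Arank :: "(vertex \<Rightarrow> real) \<Rightarrow> osimplex \<Rightarrow> nat \<Rightarrow> nat" where
  "Arank \<omega> S i = card {i'. i' < length S \<and>
      (Acoord \<omega> (S ! i') < Acoord \<omega> (S ! i) \<or> (Acoord \<omega> (S ! i') = Acoord \<omega> (S ! i) \<and> i' < i))}"

text \<open>Y_gamma for gamma = (S, S!k, l), listed in the order \<prec>_gamma.\<close>
definition Ysimp :: "(vertex \<Rightarrow> real) \<Rightarrow> osimplex \<Rightarrow> nat \<Rightarrow> int \<Rightarrow> osimplex" where
  "Ysimp \<omega> S k l =
     (let j = Arank \<omega> S k in
      concat (map (\<lambda>i. let u = S ! i; hi = u @ [acoord \<omega> u + l]; lo = u @ [acoord \<omega> u + l - 1] in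
                        if Arank \<omega> S i < j then [hi]
                        else if Arank \<omega> S i > j then [lo]
                        else [hi, lo]) [0..<length S]))"

definition Ycx :: "(vertex \<Rightarrow> real) \<Rightarrow> int \<Rightarrow> int \<Rightarrow> osimplex set \<Rightarrow> osimplex set" where
  "Ycx \<omega> M1 M2 X = {Ysimp \<omega> S k l | S k l. S \<in> X \<and> k < length S \<and> M1 \<le> l \<and> l < M2}"

definition omega_j :: "nat \<Rightarrow> nat \<Rightarrow> (nat \<Rightarrow> 'a \<Rightarrow> complex) \<Rightarrow> (nat \<Rightarrow> 'a) \<Rightarrow> (nat \<Rightarrow> nat) \<Rightarrow> nat
    \<Rightarrow> vertex \<Rightarrow> real" where
  "omega_j r1 r2 tau eps N j x =
     real (N j) / (2 * pi) * (\<Sum>l\<in>{1..r1+r2-1}. real_of_int (x ! (l - 1)) * Arg (tau (r1 + j) (eps l)))"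

fun Xcx :: "nat \<Rightarrow> nat \<Rightarrow> (nat \<Rightarrow> 'a \<Rightarrow> complex) \<Rightarrow> (nat \<Rightarrow> 'a) \<Rightarrow> (nat \<Rightarrow> nat) \<Rightarrow> nat \<Rightarrow> osimplex set" where
  "Xcx r1 r2 tau eps N 0 = {[[]]}"
| "Xcx r1 r2 tau eps N (Suc m) =
     (if m < r1 + r2 - 1 then Ycx (\<lambda>_. 0) 0 1 (Xcx r1 r2 tau eps N m)
      else (let j = m - (r1 + r2 - 1) + 1 in
            Ycx (omega_j r1 r2 tau eps N j) 0 (int (N j)) (Xcx r1 r2 tau eps N m)))"

definition frakI :: "nat \<Rightarrow> nat \<Rightarrow> (nat \<Rightarrow> 'a \<Rightarrow> complex) \<Rightarrow> (nat \<Rightarrow> 'a) \<Rightarrow> (nat \<Rightarrow> nat) \<Rightarrow> osimplex set" where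
  "frakI r1 r2 tau eps N = Xcx r1 r2 tau eps N (r1 + 2 * r2 - 1)"

definition vpt :: "vertex \<Rightarrow> (nat \<Rightarrow> real)" where
  "vpt v = (\<lambda>l. if l \<in> {1..length v} then real_of_int (v ! (l - 1)) else 0)"

definition vint :: "vertex \<Rightarrow> (nat \<Rightarrow> int)" where
  "vint v = (\<lambda>l. if l \<in> {1..length v} then v ! (l - 1) else 0)"

definition gsimp :: "osimplex \<Rightarrow> (nat \<Rightarrow> real) set" where
  "gsimp S = {p. \<exists>t::nat \<Rightarrow> real. (\<forall>i<length S. t i \<ge> 0) \<and> (\<Sum>i<length S. t i) = 1 \<and>
                  p = (\<lambda>l. \<Sum>i<length S. t i * vpt (S ! i) l)}"

definition frakX :: "nat \<Rightarrow> nat \<Rightarrow> (nat \<Rightarrow> 'a \<Rightarrow> complex) \<Rightarrow> (nat \<Rightarrow> 'a) \<Rightarrow> (nat \<Rightarrow> nat) \<Rightarrow> (nat \<Rightarrow> real) set" where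
  "frakX r1 r2 tau eps N = (\<Union>S\<in>frakI r1 r2 tau eps N. gsimp S)"

definition ftilde :: "nat \<Rightarrow> (nat \<Rightarrow> 'a::field_char_0) \<Rightarrow> ((nat \<Rightarrow> int) \<Rightarrow> 'a) \<Rightarrow> vertex \<Rightarrow> 'a" where
  "ftilde r eps beta v = beta (vint v) * eps_pow r eps (vint v)"

definition admissible_A :: "nat \<Rightarrow> nat \<Rightarrow> (nat \<Rightarrow> 'a::field_char_0 \<Rightarrow> complex) \<Rightarrow> (nat \<Rightarrow> 'a) \<Rightarrow> (nat \<Rightarrow> nat)
    \<Rightarrow> ((nat \<Rightarrow> int) \<Rightarrow> 'a) \<Rightarrow> ((nat \<Rightarrow> real) \<Rightarrow> (nat \<Rightarrow> complex)) \<Rightarrow> bool" where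
  "admissible_A r1 r2 tau eps N beta A \<longleftrightarrow>
     continuous_on (frakX r1 r2 tau eps N) A \<and>
     (\<forall>S\<in>frakI r1 r2 tau eps N. \<forall>t::nat \<Rightarrow> real.
        (\<forall>i<length S. t i \<ge> 0) \<and> (\<Sum>i<length S. t i) = 1 \<longrightarrow>
        A (\<lambda>l. \<Sum>i<length S. t i * vpt (S ! i) l)
          = (\<lambda>c. \<Sum>i<length S. complex_of_real (t i) *
                    emb r1 r2 tau (ftilde (r1 + r2 - 1) eps beta (S ! i)) c))"

definition fmap :: "((nat \<Rightarrow> real) \<Rightarrow> (nat \<Rightarrow> complex)) \<Rightarrow> (nat \<Rightarrow> real) \<Rightarrow> real \<Rightarrow> (nat \<Rightarrow> complex)" where
  "fmap A x y = (\<lambda>c. complex_of_real (exp y) * A x c)"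

definition Hsect :: "real \<Rightarrow> complex set" where
  "Hsect t = {z. \<exists>\<rho>>0. \<exists>\<theta>. -1/4 < \<theta> \<and> \<theta> < 1/4 \<and>
                  z = complex_of_real \<rho> * exp (2 * complex_of_real pi * \<i> * complex_of_real (t + \<theta>))}"

definition Omega :: "nat \<Rightarrow> nat \<Rightarrow> (nat \<Rightarrow> 'a \<Rightarrow> complex) \<Rightarrow> (nat \<Rightarrow> 'a) \<Rightarrow> (nat \<Rightarrow> nat) \<Rightarrow> nat
    \<Rightarrow> (nat \<Rightarrow> real) \<Rightarrow> real" where
  "Omega r1 r2 tau eps N j \<kappa> = \<kappa> (r1 + r2 - 1 + j) +
     real (N j) / (2 * pi) * (\<Sum>l\<in>{1..r1+r2-1}. \<kappa> l * Arg (tau (r1 + j) (eps l)))"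

definition Hcal :: "nat \<Rightarrow> nat \<Rightarrow> (nat \<Rightarrow> nat) \<Rightarrow> (nat \<Rightarrow> real) \<Rightarrow> (nat \<Rightarrow> complex) set" where
  "Hcal r1 r2 N a = {z. (\<forall>i\<in>{1..r1}. z i \<in> \<real> \<and> Re (z i) > 0) \<and>
       (\<forall>j\<in>{1..r2}. z (r1 + j) \<in> Hsect ((a j + 1/2) / real (N j))) \<and>
       (\<forall>i. i \<notin> {1..r1+r2} \<longrightarrow> z i = 0)}"

definition posCstar :: "nat \<Rightarrow> nat \<Rightarrow> (nat \<Rightarrow> complex) set" where
  "posCstar r1 r2 = {z. (\<forall>i\<in>{1..r1}. z i \<in> \<real> \<and> Re (z i) > 0) \<and>
       (\<forall>j\<in>{1..r2}. z (r1 + j) \<noteq> 0) \<and> (\<forall>i. i \<notin> {1..r1+r2} \<longrightarrow> z i = 0)}"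

end

theory Submission
  imports Defs
begin

fun lexlt :: "int list \<Rightarrow> int list \<Rightarrow> bool" where
  "lexlt [] ys = False"
| "lexlt (x#xs) [] = False"
| "lexlt (x#xs) (y#ys) = (x < y \<or> (x = y \<and> lexlt xs ys))"

lemma lexlt_irrefl: "\<not> lexlt xs xs"
  by (induct xs) auto

lemma lexlt_trans: "lexlt xs ys \<Longrightarrow> lexlt ys zs \<Longrightarrow> lexlt xs zs"
proof (induct xs arbitrary: ys zs)
  case Nil then show ?case by simp
next
  case (Cons x xs)
  then obtain y ys' where y: "ys = y # ys'" by (cases ys) auto
  with Cons obtain z zs' where z: "zs = z # zs'" by (cases zs) auto
  show ?case using Cons y z by auto
qed

lemma lexlt_total: "length xs = length ys \<Longrightarrow> xs = ys \<or> lexlt xs ys \<or> lexlt ys xs"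
proof (induct xs arbitrary: ys)
  case Nil then show ?case by simp
next
  case (Cons x xs)
  then obtain y ys' where y: "ys = y # ys'" by (cases ys) auto
  show ?case using Cons(1)[of ys'] Cons(2) y by auto
qed

lemma lexlt_append: "length u = length u' \<Longrightarrow> lexlt (u @ a) (u' @ b) = (lexlt u u' \<or> (u = u' \<and> lexlt a b))"
proof (induct u arbitrary: u')
  case Nil then show ?case by simp
next
  case (Cons x xs)
  then obtain y ys' where y: "u' = y # ys'" by (cases u') auto
  show ?case using Cons(1)[of ys'] Cons(2) y by auto
qed

lemma lexlt_map2: "length xs = length zs \<Longrightarrow> length ys = length zs \<Longrightarrow>
   lexlt (map2 (+) xs zs) (map2 (+) ys zs) = lexlt xs ys"
proof (induct zs arbitrary: xs ys)
  case Nil then show ?case by simp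
next
  case (Cons z zs)
  then obtain x xs' y ys' where "xs = x # xs'" "ys = y # ys'" by (cases xs; cases ys) auto
  then show ?case using Cons by auto
qed

fun sh :: "nat \<Rightarrow> (nat \<Rightarrow> int) \<Rightarrow> int list \<Rightarrow> int list" where
  "sh k lam [] = []"
| "sh k lam (x # xs) = (x + lam k) # sh (Suc k) lam xs"

definition shiftv :: "(nat \<Rightarrow> int) \<Rightarrow> vertex \<Rightarrow> vertex" where
  "shiftv lam u = sh 1 lam u"

lemma length_sh[simp]: "length (sh k lam u) = length u"
  by (induct u arbitrary: k) auto

lemma length_shiftv[simp]: "length (shiftv lam u) = length u"
  by (simp add: shiftv_def)

lemma nth_sh: "i < length u \<Longrightarrow> sh k lam u ! i = u ! i + lam (k + i)"
  by (induct u arbitrary: k i) (auto simp: nth_Cons split: nat.splits)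

lemma nth_shiftv: "i < length u \<Longrightarrow> shiftv lam u ! i = u ! i + lam (Suc i)"
  by (simp add: shiftv_def nth_sh)

lemma sh_snoc: "sh k lam (u @ [z]) = sh k lam u @ [z + lam (k + length u)]"
  by (induct u arbitrary: k) auto

lemma shiftv_snoc: "shiftv lam (u @ [z]) = shiftv lam u @ [z + lam (Suc (length u))]"
  by (simp add: shiftv_def sh_snoc)

lemma shiftv_Nil[simp]: "shiftv lam [] = []"
  by (simp add: shiftv_def)

lemma lexlt_sh: "length x = length y \<Longrightarrow> lexlt (sh k lam x) (sh k lam y) = lexlt x y"
proof (induct x arbitrary: y k)
  case Nil then show ?case by simp
next
  case (Cons a x)
  then obtain b y' where "y = b # y'" by (cases y) auto
  then show ?case using Cons by auto
qed

lemma lexlt_shiftv: "length x = length y \<Longrightarrow> lexlt (shiftv lam x) (shiftv lam y) = lexlt x y"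
  unfolding shiftv_def by (rule lexlt_sh)

lemma shiftv_inj: "length x = length y \<Longrightarrow> shiftv lam x = shiftv lam y \<Longrightarrow> x = y"
  by (metis lexlt_shiftv lexlt_total lexlt_irrefl)

lemma butlast_shiftv: "butlast (shiftv lam v) = shiftv lam (butlast v)"
proof (cases v rule: rev_cases)
  case Nil then show ?thesis by simp
next
  case (snoc u z) then show ?thesis by (simp add: shiftv_snoc)
qed

lemma last_shiftv: assumes "v \<noteq> []" shows "last (shiftv lam v) = last v + lam (length v)"
proof (cases v rule: rev_cases)
  case Nil then show ?thesis using assms by simp
next
  case (snoc u z) then show ?thesis by (simp add: shiftv_snoc)
qed


definition ovl :: "(vertex \<Rightarrow> real) \<Rightarrow> vertex \<Rightarrow> real" where
  "ovl \<omega> v = real_of_int (last v) + \<omega> (butlast v)"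

definition Kle :: "(vertex \<Rightarrow> real) \<Rightarrow> vertex \<Rightarrow> vertex \<Rightarrow> bool" where
  "Kle \<omega> x y \<longleftrightarrow> ovl \<omega> x < ovl \<omega> y \<or>
     (ovl \<omega> x = ovl \<omega> y \<and> (butlast x = butlast y \<or> lexlt (butlast y) (butlast x)))"

definition incr :: "vertex \<Rightarrow> vertex" where
  "incr v = butlast v @ [last v + 1]"

lemma sorted_wrt_concat_map:
  assumes "\<forall>x\<in>set xs. sorted_wrt R (f x)"
    and "sorted_wrt (\<lambda>x y. \<forall>a\<in>set (f x). \<forall>b\<in>set (f y). R a b) xs"
  shows "sorted_wrt R (concat (map f xs))"
  using assms by (induct xs) (auto simp: sorted_wrt_append)

definition prec :: "(vertex \<Rightarrow> real) \<Rightarrow> osimplex \<Rightarrow> nat \<Rightarrow> nat \<Rightarrow> bool" where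
  "prec \<omega> S i k \<longleftrightarrow> Acoord \<omega> (S ! i) < Acoord \<omega> (S ! k) \<or> (Acoord \<omega> (S ! i) = Acoord \<omega> (S ! k) \<and> i < k)"

lemma Arank_prec: "Arank \<omega> S k = card {i'. i' < length S \<and> prec \<omega> S i' k}"
  by (simp add: Arank_def prec_def)

lemma prec_trans: "prec \<omega> S i j \<Longrightarrow> prec \<omega> S j k \<Longrightarrow> prec \<omega> S i k"
  unfolding prec_def by auto

lemma prec_irrefl: "\<not> prec \<omega> S i i"
  unfolding prec_def by auto

lemma prec_total: "i \<noteq> k \<Longrightarrow> prec \<omega> S i k \<or> prec \<omega> S k i"
  unfolding prec_def by auto

lemma Arank_less: assumes "i < length S" "prec \<omega> S i k" shows "Arank \<omega> S i < Arank \<omega> S k"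
proof -
  have "{i'. i' < length S \<and> prec \<omega> S i' i} \<subset> {i'. i' < length S \<and> prec \<omega> S i' k}"
    using assms prec_trans[of \<omega> S _ i k] prec_irrefl[of \<omega> S i] by auto
  then show ?thesis unfolding Arank_prec by (intro psubset_card_mono) auto
qed

lemma Arank_lessD: assumes "i < length S" "k < length S" "Arank \<omega> S i < Arank \<omega> S k"
  shows "prec \<omega> S i k"
  using assms Arank_less[of k S \<omega> i] prec_total[of i k \<omega> S] by (cases "i = k") auto

lemma Arank_eqD: assumes "i < length S" "k < length S" "Arank \<omega> S i = Arank \<omega> S k"
  shows "i = k"
  using assms Arank_less[of k S \<omega> i] Arank_less[of i S \<omega> k] prec_total[of i k \<omega> S] by force

lemma Acoord_bounds: "0 < Acoord \<omega> u" "Acoord \<omega> u \<le> 1"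
  unfolding Acoord_def by (smt (verit) ceiling_correct)+

lemma ovl_lift: "ovl \<omega> (u @ [acoord \<omega> u + l]) = Acoord \<omega> u + real_of_int l"
  unfolding ovl_def Acoord_def acoord_def by simp

lemma ovl_lift1: "ovl \<omega> (u @ [acoord \<omega> u + l - 1]) = Acoord \<omega> u + real_of_int l - 1"
  unfolding ovl_def Acoord_def acoord_def by simp

lemma mem_Ysimp:
  assumes "v \<in> set (Ysimp \<omega> S k l)"
  shows "\<exists>i<length S. (v = S ! i @ [acoord \<omega> (S ! i) + l] \<and> Arank \<omega> S i \<le> Arank \<omega> S k) \<or>
                      (v = S ! i @ [acoord \<omega> (S ! i) + l - 1] \<and> Arank \<omega> S k \<le> Arank \<omega> S i)"
  using assms unfolding Ysimp_def Let_def
  by (auto split: if_splits)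

lemma lo_in_Ysimp:
  assumes "k < length S"
  shows "S ! k @ [acoord \<omega> (S ! k) + l - 1] \<in> set (Ysimp \<omega> S k l)"
  using assms unfolding Ysimp_def Let_def
  by (auto intro!: bexI[of _ k])

lemma Ysimp_props:
  fixes \<omega> :: "vertex \<Rightarrow> real" and l :: int
  assumes sorted: "sorted_wrt (\<lambda>a b. lexlt b a) S"
    and len: "\<forall>u\<in>set S. length u = m"
    and k: "k < length S"
  defines "b \<equiv> S ! k @ [acoord \<omega> (S ! k) + l - 1]"
  shows "\<forall>v\<in>set (Ysimp \<omega> S k l). length v = Suc m \<and> butlast v \<in> set S"
    and "b \<in> set (Ysimp \<omega> S k l)"
    and "\<forall>v\<in>set (Ysimp \<omega> S k l). Kle \<omega> b v \<and> Kle \<omega> v (incr b)"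
    and "sorted_wrt (\<lambda>a b. lexlt b a) (Ysimp \<omega> S k l)"
proof -
  show "\<forall>v\<in>set (Ysimp \<omega> S k l). length v = Suc m \<and> butlast v \<in> set S"
    using mem_Ysimp len by fastforce
  show "b \<in> set (Ysimp \<omega> S k l)" unfolding b_def by (rule lo_in_Ysimp[OF k])
  have srt: "\<And>i j. i < j \<Longrightarrow> j < length S \<Longrightarrow> lexlt (S ! j) (S ! i)"
    using sorted by (simp add: sorted_wrt_iff_nth_less)
  have ib: "incr b = S ! k @ [acoord \<omega> (S ! k) + l]" unfolding b_def incr_def by simp
  show "\<forall>v\<in>set (Ysimp \<omega> S k l). Kle \<omega> b v \<and> Kle \<omega> v (incr b)"
  proof
    fix v assume "v \<in> set (Ysimp \<omega> S k l)"
    from mem_Ysimp[OF this] obtain i where i: "i < length S" and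
      c: "(v = S ! i @ [acoord \<omega> (S ! i) + l] \<and> Arank \<omega> S i \<le> Arank \<omega> S k) \<or>
          (v = S ! i @ [acoord \<omega> (S ! i) + l - 1] \<and> Arank \<omega> S k \<le> Arank \<omega> S i)" by blast
    have Ai: "0 < Acoord \<omega> (S ! i)" "Acoord \<omega> (S ! i) \<le> 1" by (rule Acoord_bounds)+
    have Ak: "0 < Acoord \<omega> (S ! k)" "Acoord \<omega> (S ! k) \<le> 1" by (rule Acoord_bounds)+
    from c show "Kle \<omega> b v \<and> Kle \<omega> v (incr b)"
    proof
      assume h: "v = S ! i @ [acoord \<omega> (S ! i) + l] \<and> Arank \<omega> S i \<le> Arank \<omega> S k"
      have p: "i = k \<or> prec \<omega> S i k"
        using h i k Arank_lessD[of i S k \<omega>] by (cases "Arank \<omega> S i = Arank \<omega> S k") (auto dest: Arank_eqD)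
      have "Kle \<omega> b v" unfolding Kle_def b_def h[THEN conjunct1] ovl_lift ovl_lift1 using Ai Ak by simp
      moreover have "Kle \<omega> v (incr b)"
      proof (cases "i = k")
        case True then show ?thesis unfolding Kle_def ib h[THEN conjunct1] by simp
      next
        case False
        with p have "prec \<omega> S i k" by simp
        then show ?thesis unfolding Kle_def ib h[THEN conjunct1] ovl_lift prec_def
          using srt[of i k] k by auto
      qed
      ultimately show ?thesis ..
    next
      assume h: "v = S ! i @ [acoord \<omega> (S ! i) + l - 1] \<and> Arank \<omega> S k \<le> Arank \<omega> S i"
      have p: "i = k \<or> prec \<omega> S k i"
        using h i k Arank_lessD[of k S i \<omega>] by (cases "Arank \<omega> S i = Arank \<omega> S k") (auto dest: Arank_eqD)
      have "Kle \<omega> v (incr b)" unfolding Kle_def ib h[THEN conjunct1] ovl_lift ovl_lift1 using Ai Ak by simp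
      moreover have "Kle \<omega> b v"
      proof (cases "i = k")
        case True then show ?thesis unfolding Kle_def b_def h[THEN conjunct1] by simp
      next
        case False
        with p have "prec \<omega> S k i" by simp
        then show ?thesis unfolding Kle_def b_def h[THEN conjunct1] ovl_lift1 prec_def
          using srt[of k i] i by auto
      qed
      ultimately show ?thesis by blast
    qed
  qed
  show "sorted_wrt (\<lambda>a b. lexlt b a) (Ysimp \<omega> S k l)"
    unfolding Ysimp_def Let_def
    apply (rule sorted_wrt_concat_map)
    subgoal using len by (auto simp: lexlt_append)
    subgoal unfolding sorted_wrt_iff_nth_less using srt len by (auto simp: lexlt_append)
    done
qed


fun Win :: "(nat \<Rightarrow> vertex \<Rightarrow> real) \<Rightarrow> nat \<Rightarrow> vertex set \<Rightarrow> bool" where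
  "Win wq 0 V = (V = {[]})"
| "Win wq (Suc m) V = (finite V \<and> (\<exists>B. Win wq m B \<and> (\<forall>v\<in>V. length v = Suc m \<and> butlast v \<in> B)) \<and>
      (\<exists>b\<in>V. \<forall>v\<in>V. Kle (wq m) b v \<and> Kle (wq m) v (incr b)))"

definition oms :: "nat \<Rightarrow> nat \<Rightarrow> (nat \<Rightarrow> 'a \<Rightarrow> complex) \<Rightarrow> (nat \<Rightarrow> 'a) \<Rightarrow> (nat \<Rightarrow> nat) \<Rightarrow> nat \<Rightarrow> vertex \<Rightarrow> real" where
  "oms r1 r2 tau eps N m = (if m < r1 + r2 - 1 then (\<lambda>_. 0) else omega_j r1 r2 tau eps N (m - (r1 + r2 - 1) + 1))"

lemma Xcx_SucD:
  assumes "T \<in> Xcx r1 r2 tau eps N (Suc m)"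
  shows "\<exists>S k l. S \<in> Xcx r1 r2 tau eps N m \<and> k < length S \<and> T = Ysimp (oms r1 r2 tau eps N m) S k l"
  using assms by (auto simp: Ycx_def oms_def Let_def split: if_splits)

lemma Win_len: "Win wq m V \<Longrightarrow> v \<in> V \<Longrightarrow> length v = m"
  by (cases m) auto

lemma Win_finite: "Win wq m V \<Longrightarrow> finite V"
  by (cases m) auto

lemma Xcx_inv:
  "\<forall>S\<in>Xcx r1 r2 tau eps N m. S \<noteq> [] \<and> sorted_wrt (\<lambda>a b. lexlt b a) S \<and> (\<forall>u\<in>set S. length u = m)
      \<and> Win (oms r1 r2 tau eps N) m (set S)"
proof (induct m)
  case 0 then show ?case by simp
next
  case (Suc m)
  show ?case
  proof
    fix T assume "T \<in> Xcx r1 r2 tau eps N (Suc m)"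
    from Xcx_SucD[OF this] obtain S k l where S: "S \<in> Xcx r1 r2 tau eps N m" and k: "k < length S"
      and T: "T = Ysimp (oms r1 r2 tau eps N m) S k l" by blast
    from Suc S have inv: "sorted_wrt (\<lambda>a b. lexlt b a) S" "\<forall>u\<in>set S. length u = m"
       "Win (oms r1 r2 tau eps N) m (set S)" by auto
    note P = Ysimp_props[OF inv(1,2) k, of "oms r1 r2 tau eps N m" l]
    show "T \<noteq> [] \<and> sorted_wrt (\<lambda>a b. lexlt b a) T \<and> (\<forall>u\<in>set T. length u = Suc m)
      \<and> Win (oms r1 r2 tau eps N) (Suc m) (set T)"
      unfolding T using P inv(3) by fastforce
  qed
qed

lemma Kle_ovl: "Kle w x y \<Longrightarrow> ovl w x \<le> ovl w y"
  unfolding Kle_def by auto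

lemma ovl_incr: "ovl w (incr b) = ovl w b + 1"
  unfolding ovl_def incr_def by simp

lemma Win_window:
  "Win wq m V \<Longrightarrow> s < m \<Longrightarrow> \<exists>c. \<forall>v\<in>V. c \<le> ovl (wq s) (take (Suc s) v) \<and> ovl (wq s) (take (Suc s) v) \<le> c + 1"
proof (induct m arbitrary: V)
  case 0 then show ?case by simp
next
  case (Suc m)
  from Suc(2) obtain B where B: "Win wq m B" "\<forall>v\<in>V. length v = Suc m \<and> butlast v \<in> B" by auto
  from Suc(2) obtain b where b: "b \<in> V" "\<forall>v\<in>V. Kle (wq m) b v \<and> Kle (wq m) v (incr b)" by auto
  show ?case
  proof (cases "s = m")
    case True
    show ?thesis
    proof (intro exI ballI)
      fix v assume v: "v \<in> V"
      have "take (Suc s) v = v" using B v True by simp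
      then show "ovl (wq m) b \<le> ovl (wq s) (take (Suc s) v) \<and> ovl (wq s) (take (Suc s) v) \<le> ovl (wq m) b + 1"
        using b v Kle_ovl ovl_incr True by metis
    qed
  next
    case False
    with Suc(3) have "s < m" by simp
    from Suc(1)[OF B(1) this] obtain c where c: "\<forall>v\<in>B. c \<le> ovl (wq s) (take (Suc s) v) \<and> ovl (wq s) (take (Suc s) v) \<le> c + 1" by blast
    show ?thesis
    proof (intro exI ballI)
      fix v assume v: "v \<in> V"
      have "take (Suc s) v = take (Suc s) (butlast v)" using B v \<open>s < m\<close>
        by (simp add: butlast_conv_take min_def)
      then show "c \<le> ovl (wq s) (take (Suc s) v) \<and> ovl (wq s) (take (Suc s) v) \<le> c + 1"
        using c B v by simp
    qed
  qed
qed


lemma Kle_refl: "Kle w x x" unfolding Kle_def by simp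

lemma Kle_trans: assumes "Kle w x y" "Kle w y z" shows "Kle w x z"
proof -
  have "ovl w x \<le> ovl w y" "ovl w y \<le> ovl w z" using assms unfolding Kle_def by auto
  show ?thesis
  proof (cases "ovl w x = ovl w z")
    case True
    then have e: "ovl w x = ovl w y" "ovl w y = ovl w z" using \<open>ovl w x \<le> ovl w y\<close> \<open>ovl w y \<le> ovl w z\<close> by auto
    then have "butlast x = butlast y \<or> lexlt (butlast y) (butlast x)" "butlast y = butlast z \<or> lexlt (butlast z) (butlast y)"
      using assms unfolding Kle_def by auto
    then have "butlast x = butlast z \<or> lexlt (butlast z) (butlast x)" using lexlt_trans[of "butlast z" "butlast y" "butlast x"] by auto
    then show ?thesis using True unfolding Kle_def by simp
  next
    case False
    then show ?thesis using \<open>ovl w x \<le> ovl w y\<close> \<open>ovl w y \<le> ovl w z\<close> unfolding Kle_def by auto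
  qed
qed

lemma snoc_eq: "x \<noteq> [] \<Longrightarrow> x = butlast x @ [last x]" by simp

lemma Kle_antisym: assumes "x \<noteq> []" "y \<noteq> []" "Kle w x y" "Kle w y x" shows "x = y"
proof -
  have o: "ovl w x = ovl w y" using assms(3,4) unfolding Kle_def by auto
  have "butlast x = butlast y \<or> lexlt (butlast y) (butlast x)" "butlast y = butlast x \<or> lexlt (butlast x) (butlast y)"
    using assms(3,4) o unfolding Kle_def by auto
  then have bl: "butlast x = butlast y" using lexlt_trans[of "butlast x" "butlast y" "butlast x"] lexlt_irrefl[of "butlast x"] lexlt_irrefl[of "butlast y"] by auto
  then have "last x = last y" using o unfolding ovl_def by simp
  then have "butlast x @ [last x] = butlast y @ [last y]" using bl by simp
  then show ?thesis using assms(1,2) by simp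
qed

lemma Kle_total: assumes "length x = length y" shows "Kle w x y \<or> Kle w y x"
  using lexlt_total[of "butlast x" "butlast y"] assms unfolding Kle_def by auto

lemma incr_simps: "butlast (incr x) = butlast x" "last (incr x) = last x + 1" "incr x \<noteq> []"
  "length (incr x) = Suc (length (butlast x))"
  unfolding incr_def by auto

lemma incr_inj: "x \<noteq> [] \<Longrightarrow> y \<noteq> [] \<Longrightarrow> incr x = incr y \<Longrightarrow> x = y"
proof -
  assume a: "x \<noteq> []" "y \<noteq> []" "incr x = incr y"
  then have "butlast x = butlast y" "last x = last y" using incr_simps(1,2)[of x] incr_simps(1,2)[of y] by auto
  then have "butlast x @ [last x] = butlast y @ [last y]" by simp
  then show "x = y" using a by simp
qed

lemma Kle_incr: "Kle w x y \<Longrightarrow> Kle w (incr x) (incr y)"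
  unfolding Kle_def ovl_incr incr_simps by simp

lemma Kle_fiber_up: assumes "butlast x = butlast y" "last x + 1 \<le> last y" shows "Kle w (incr x) y"
  using assms unfolding Kle_def ovl_def incr_def by auto

lemma Kle_fiber_last: assumes "butlast x = butlast y" "Kle w x y" shows "last x \<le> last y"
  using assms unfolding Kle_def ovl_def by auto


definition rep :: "vertex set \<Rightarrow> (vertex \<Rightarrow> real) \<Rightarrow> (nat \<Rightarrow> real) \<Rightarrow> bool" where
  "rep V w p \<longleftrightarrow> (\<forall>v. w v \<noteq> 0 \<longrightarrow> v \<in> V) \<and> (\<forall>v. 0 \<le> w v) \<and> sum w V = 1 \<and>
     p = (\<lambda>l. \<Sum>v\<in>V. w v * vpt v l)"

lemma vpt_butlast: "length v = Suc m \<Longrightarrow> vpt (butlast v) l = (if l \<le> m then vpt v l else 0)"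
  unfolding vpt_def by (auto simp: nth_butlast)

lemma vpt_last: "length v = Suc m \<Longrightarrow> vpt v (Suc m) = real_of_int (last v)"
  unfolding vpt_def by (cases "v = []") (auto simp: last_conv_nth)

definition GT :: "(vertex \<Rightarrow> real) \<Rightarrow> (vertex \<Rightarrow> real) \<Rightarrow> vertex \<Rightarrow> bool" where
  "GT w w' u \<longleftrightarrow> (\<exists>l l'. w l > 0 \<and> w' l' > 0 \<and> butlast l = u \<and> butlast l' = u \<and> last l > last l')"

lemma fib_A:
  assumes fin: "finite W" and sw: "\<forall>v. w v \<noteq> 0 \<longrightarrow> v \<in> W" and sw': "\<forall>v. w' v \<noteq> 0 \<longrightarrow> v \<in> W"
    and nn: "\<forall>v. 0 \<le> w v" and nn': "\<forall>v. 0 \<le> w' v"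
    and ne: "\<forall>v\<in>W. v \<noteq> []"
    and mass: "sum w {v\<in>W. butlast v = u} = sum w' {v\<in>W. butlast v = u}"
    and g1: "\<not> GT w w' u" and g2: "\<not> GT w' w u"
    and bv: "butlast v = u"
  shows "w v = w' v"
proof -
  let ?F = "{v\<in>W. butlast v = u}"
  have finF: "finite ?F" using fin by simp
  show ?thesis
  proof (cases "\<exists>l\<in>?F. w l > 0")
    case False
    have wz: "\<forall>x\<in>?F. w x = 0"
    proof
      fix x assume "x \<in> ?F"
      with False have "\<not> w x > 0" by blast
      then show "w x = 0" using nn[rule_format, of x] by linarith
    qed
    then have "sum w' ?F = 0" using mass by simp
    then have wz': "\<forall>x\<in>?F. w' x = 0" using sum_nonneg_eq_0_iff[OF finF] nn' by blast
    show ?thesis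
    proof (cases "v \<in> W")
      case True then show ?thesis using wz wz' bv by simp
    next
      case False then show ?thesis using sw sw' by metis
    qed
  next
    case True
    then obtain l where l: "l \<in> ?F" "w l > 0" by blast
    have "sum w ?F > 0" using l finF nn by (intro sum_pos2[of _ l]) auto
    then have "sum w' ?F \<noteq> 0" using mass by simp
    then have "\<not> (\<forall>x\<in>?F. w' x = 0)" using sum.neutral[of ?F w'] by blast
    then obtain l' where l'0: "l' \<in> ?F" "w' l' \<noteq> 0" by blast
    then have l': "l' \<in> ?F" "w' l' > 0" using nn'[rule_format, of l'] by auto
    have "\<not> last l > last l'" using g1 l l' unfolding GT_def by blast
    moreover have "\<not> last l' > last l" using g2 l l' unfolding GT_def by blast
    ultimately have eql: "last l = last l'" by simp
    define e where "e = u @ [last l]"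
    have le: "l = e" using l ne append_butlast_last_id[of l] unfolding e_def by auto
    have pw: "\<forall>x\<in>?F. w x > 0 \<longrightarrow> x = e"
    proof (intro ballI impI)
      fix x assume x: "x \<in> ?F" "w x > 0"
      have "\<not> last x > last l'" using g1 x l' unfolding GT_def by blast
      moreover have "\<not> last l' > last x" using g2 x l' unfolding GT_def by blast
      ultimately have "last x = last l'" by simp
      then show "x = e" using x ne eql append_butlast_last_id[of x] unfolding e_def by auto
    qed
    have pw': "\<forall>x\<in>?F. w' x > 0 \<longrightarrow> x = e"
    proof (intro ballI impI)
      fix x assume x: "x \<in> ?F" "w' x > 0"
      have "\<not> last x > last l" using g2 x l unfolding GT_def by blast
      moreover have "\<not> last l > last x" using g1 x l unfolding GT_def by blast
      ultimately have "last x = last l" by simp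
      then show "x = e" using x ne append_butlast_last_id[of x] unfolding e_def by auto
    qed
    have eF: "e \<in> ?F" using l le by simp
    have z: "\<forall>x\<in>?F. x \<noteq> e \<longrightarrow> w x = 0 \<and> w' x = 0"
    proof (intro ballI impI)
      fix x assume x: "x \<in> ?F" "x \<noteq> e"
      have "\<not> w x > 0" "\<not> w' x > 0" using pw pw' x by auto
      then show "w x = 0 \<and> w' x = 0" using nn[rule_format, of x] nn'[rule_format, of x] by linarith
    qed
    have z1: "sum w (?F - {e}) = 0" "sum w' (?F - {e}) = 0" using z by (auto intro: sum.neutral)
    have "sum w ?F = w e" using sum.remove[OF finF eF, of w] z1 by linarith
    moreover have "sum w' ?F = w' e" using sum.remove[OF finF eF, of w'] z1 by linarith
    ultimately have we: "w e = w' e" using mass by simp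
    show ?thesis
    proof (cases "v \<in> W")
      case True
      then have "v \<in> ?F" using bv by simp
      then show ?thesis using z we by (cases "v = e") auto
    next
      case False then show ?thesis using sw sw' by metis
    qed
  qed
qed


lemma fib_C:
  assumes fin: "finite W" and sw: "\<forall>v. w v \<noteq> 0 \<longrightarrow> v \<in> W" and sw': "\<forall>v. w' v \<noteq> 0 \<longrightarrow> v \<in> W"
    and nn: "\<forall>v. 0 \<le> w v" and nn': "\<forall>v. 0 \<le> w' v"
    and mass: "sum w {v\<in>W. butlast v = u} = sum w' {v\<in>W. butlast v = u}"
    and g1: "\<not> GT w w' u"
  shows "(\<Sum>v\<in>{v\<in>W. butlast v = u}. w v * real_of_int (last v)) \<le> (\<Sum>v\<in>{v\<in>W. butlast v = u}. w' v * real_of_int (last v))"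
    and "GT w' w u \<Longrightarrow> (\<Sum>v\<in>{v\<in>W. butlast v = u}. w v * real_of_int (last v)) < (\<Sum>v\<in>{v\<in>W. butlast v = u}. w' v * real_of_int (last v))"
proof -
  let ?F = "{v\<in>W. butlast v = u}"
  have finF: "finite ?F" using fin by simp
  have res: "(\<Sum>v\<in>?F. w v * real_of_int (last v)) \<le> (\<Sum>v\<in>?F. w' v * real_of_int (last v)) \<and>
    (GT w' w u \<longrightarrow> (\<Sum>v\<in>?F. w v * real_of_int (last v)) < (\<Sum>v\<in>?F. w' v * real_of_int (last v)))"
  proof (cases "\<exists>l\<in>?F. w l > 0")
    case False
    have wz: "\<forall>x\<in>?F. w x = 0"
    proof
      fix x assume "x \<in> ?F"
      with False have "\<not> w x > 0" by blast
      then show "w x = 0" using nn[rule_format, of x] by linarith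
    qed
    then have "sum w' ?F = 0" using mass by simp
    then have "\<forall>x\<in>?F. w' x = 0" using sum_nonneg_eq_0_iff[OF finF] nn' by blast
    moreover have "\<not> GT w' w u" using False sw unfolding GT_def by auto
    ultimately show ?thesis using wz by simp
  next
    case True
    let ?P = "{v\<in>?F. w v > 0}"
    have finP: "finite ?P" using finF by (rule finite_subset[rotated]) auto
    have neP: "?P \<noteq> {}" using True by auto
    define c where "c = Max (last ` ?P)"
    have cmax: "\<And>x. x \<in> ?P \<Longrightarrow> last x \<le> c" unfolding c_def using finP by auto
    have "c \<in> last ` ?P" unfolding c_def using Max_in[of "last ` ?P"] finP neP by blast
    then obtain m where m: "m \<in> ?P" "last m = c" by blast
    have up: "\<And>x. x \<in> ?F \<Longrightarrow> w' x > 0 \<Longrightarrow> c \<le> last x"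
      using g1 m unfolding GT_def by force
    have a1: "w x * real_of_int (last x) \<le> w x * real_of_int c" if x: "x \<in> ?F" for x
    proof (cases "w x > 0")
      case True
      then have "last x \<le> c" using cmax x by auto
      then show ?thesis using True by (intro mult_left_mono) auto
    next
      case False
      then have "w x = 0" using nn[rule_format, of x] by simp
      then show ?thesis by simp
    qed
    have a2: "w' x * real_of_int c \<le> w' x * real_of_int (last x)" if x: "x \<in> ?F" for x
    proof (cases "w' x > 0")
      case True
      then have "c \<le> last x" using up x by auto
      then show ?thesis using True by (intro mult_left_mono) auto
    next
      case False
      then have "w' x = 0" using nn'[rule_format, of x] by simp
      then show ?thesis by simp
    qed
    have s1: "(\<Sum>v\<in>?F. w v * real_of_int (last v)) \<le> (\<Sum>v\<in>?F. w v * real_of_int c)"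
      by (rule sum_mono) (rule a1)
    have s2: "(\<Sum>v\<in>?F. w' v * real_of_int c) \<le> (\<Sum>v\<in>?F. w' v * real_of_int (last v))"
      by (rule sum_mono) (rule a2)
    have eqm: "(\<Sum>v\<in>?F. w v * real_of_int c) = (\<Sum>v\<in>?F. w' v * real_of_int c)"
      using mass by (simp add: sum_distrib_right[symmetric])
    have strict: "GT w' w u \<Longrightarrow> (\<Sum>v\<in>?F. w v * real_of_int (last v)) < (\<Sum>v\<in>?F. w' v * real_of_int (last v))"
    proof -
      assume "GT w' w u"
      then obtain l' l where ll: "w' l' > 0" "w l > 0" "butlast l' = u" "butlast l = u" "last l' > last l"
        unfolding GT_def by blast
      have lF: "l \<in> ?F" "l' \<in> ?F" using ll sw sw' by auto
      show ?thesis
      proof (cases "last l' > c")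
        case True
        have "(\<Sum>v\<in>?F. w' v * real_of_int c) < (\<Sum>v\<in>?F. w' v * real_of_int (last v))"
          apply (rule sum_strict_mono_ex1[OF finF])
          using a2 apply blast
          using lF(2) ll(1) True by (intro bexI[of _ l']) auto
        then show ?thesis using s1 eqm by linarith
      next
        case False
        then have "last l < c" using ll by simp
        have "(\<Sum>v\<in>?F. w v * real_of_int (last v)) < (\<Sum>v\<in>?F. w v * real_of_int c)"
          apply (rule sum_strict_mono_ex1[OF finF])
          using a1 apply blast
          using lF(1) ll(2) \<open>last l < c\<close> by (intro bexI[of _ l]) auto
        then show ?thesis using s2 eqm by linarith
      qed
    qed
    show ?thesis using s1 s2 eqm strict by linarith
  qed
  then show "(\<Sum>v\<in>?F. w v * real_of_int (last v)) \<le> (\<Sum>v\<in>?F. w' v * real_of_int (last v))"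
    and "GT w' w u \<Longrightarrow> (\<Sum>v\<in>?F. w v * real_of_int (last v)) < (\<Sum>v\<in>?F. w' v * real_of_int (last v))"
    by blast+
qed


lemma rep_base:
  assumes r: "rep V w p" and fV: "finite V" and fB: "finite B"
    and VB: "\<forall>v\<in>V. length v = Suc m \<and> butlast v \<in> B"
  shows "rep B (\<lambda>u. sum w {v\<in>V. butlast v = u}) (\<lambda>l. if l \<le> m then p l else 0)"
proof -
  have sub: "butlast ` V \<subseteq> B" using VB by auto
  have grp: "\<And>h. (\<Sum>u\<in>B. sum h {v\<in>V. butlast v = u}) = sum h V"
    using sum.group[OF fV fB sub] by simp
  have s1: "\<forall>u. sum w {v\<in>V. butlast v = u} \<noteq> 0 \<longrightarrow> u \<in> B"
  proof (intro allI impI)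
    fix u assume "sum w {v\<in>V. butlast v = u} \<noteq> 0"
    show "u \<in> B"
    proof (rule ccontr)
      assume "u \<notin> B"
      then have e: "{v\<in>V. butlast v = u} = {}" using VB by auto
      have "sum w {v\<in>V. butlast v = u} = 0" by (simp only: e sum.empty)
      then show False using \<open>sum w {v\<in>V. butlast v = u} \<noteq> 0\<close> by simp
    qed
  qed
  have s2: "\<forall>u. 0 \<le> sum w {v\<in>V. butlast v = u}" using r unfolding rep_def by (simp add: sum_nonneg)
  have s3: "(\<Sum>u\<in>B. sum w {v\<in>V. butlast v = u}) = 1" using grp[of w] r unfolding rep_def by simp
  have s4: "(\<lambda>l. if l \<le> m then p l else 0) = (\<lambda>l. \<Sum>u\<in>B. sum w {v\<in>V. butlast v = u} * vpt u l)"
  proof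
    fix l
    have "(\<Sum>u\<in>B. sum w {v\<in>V. butlast v = u} * vpt u l) = (\<Sum>u\<in>B. \<Sum>v\<in>{v\<in>V. butlast v = u}. w v * vpt (butlast v) l)"
      by (rule sum.cong) (auto simp: sum_distrib_right)
    also have "\<dots> = (\<Sum>v\<in>V. w v * vpt (butlast v) l)" by (rule grp)
    also have "\<dots> = (\<Sum>v\<in>V. w v * (if l \<le> m then vpt v l else 0))"
      by (rule sum.cong) (use VB vpt_butlast in auto)
    also have "\<dots> = (if l \<le> m then p l else 0)" using r unfolding rep_def by simp
    finally show "(if l \<le> m then p l else 0) = (\<Sum>u\<in>B. sum w {v\<in>V. butlast v = u} * vpt u l)" by simp
  qed
  show ?thesis unfolding rep_def using s1 s2 s3 s4 by blast
qed

lemma fib_ext: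
  assumes "finite W" "V \<subseteq> W" "\<forall>v. w v \<noteq> 0 \<longrightarrow> v \<in> V"
  shows "sum w {v\<in>W. butlast v = u} = sum w {v\<in>V. butlast v = u}"
  by (rule sum.mono_neutral_right) (use assms in auto)

lemma two_pt:
  assumes "finite F" "x \<in> F" "x \<noteq> y" "\<forall>v\<in>F. v \<noteq> x \<and> v \<noteq> y \<longrightarrow> h v = 0" "y \<notin> F \<longrightarrow> h y = 0"
  shows "sum h F = h x + (h y :: real)"
proof (cases "y \<in> F")
  case True
  have "sum h F = h x + sum h (F - {x})" using sum.remove[OF assms(1,2)] by simp
  also have "sum h (F - {x}) = h y + sum h (F - {x} - {y})" using sum.remove[of "F - {x}" y h] True assms by auto
  also have "sum h (F - {x} - {y}) = 0" using assms by (auto intro: sum.neutral)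
  finally show ?thesis by simp
next
  case False
  have "sum h F = h x + sum h (F - {x})" using sum.remove[OF assms(1,2)] by simp
  also have "sum h (F - {x}) = 0" using assms False by (auto intro: sum.neutral)
  finally show ?thesis using assms False by simp
qed


lemma case_lt:
  fixes w w' :: "vertex \<Rightarrow> real"
  assumes fin: "finite W" and sw: "\<forall>v. w v \<noteq> 0 \<longrightarrow> v \<in> V" and sw': "\<forall>v. w' v \<noteq> 0 \<longrightarrow> v \<in> V'"
    and VW: "V \<subseteq> W" "V' \<subseteq> W"
    and nn: "\<forall>v. 0 \<le> w v" and nn': "\<forall>v. 0 \<le> w' v"
    and ne: "\<forall>v\<in>W. v \<noteq> []"
    and mass: "\<forall>u. sum w {v\<in>W. butlast v = u} = sum w' {v\<in>W. butlast v = u}"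
    and phi: "(\<Sum>v\<in>W. w v * real_of_int (last v)) = (\<Sum>v\<in>W. w' v * real_of_int (last v))"
    and b: "b \<in> V" "\<forall>v\<in>V. Kle om b v \<and> Kle om v (incr b)"
    and b': "b' \<in> V'" "\<forall>v\<in>V'. Kle om b' v \<and> Kle om v (incr b')"
    and lt: "Kle om b b'" "b \<noteq> b'"
  shows "w = w'"
proof -
  have swW: "\<forall>v. w v \<noteq> 0 \<longrightarrow> v \<in> W" "\<forall>v. w' v \<noteq> 0 \<longrightarrow> v \<in> W" using sw sw' VW by auto
  have noGT: "\<not> GT w w' u" for u
  proof
    assume "GT w w' u"
    then obtain l l' where ll: "w l > 0" "w' l' > 0" "butlast l = u" "butlast l' = u" "last l > last l'"
      unfolding GT_def by blast
    have lV: "l \<in> V" "l' \<in> V'" using ll sw sw' by auto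
    have k1: "Kle om (incr l') l" using ll by (intro Kle_fiber_up) auto
    have k2: "Kle om (incr b') (incr l')" using b' lV by (intro Kle_incr) auto
    have k3: "Kle om (incr b) (incr b')" using lt by (intro Kle_incr) auto
    have k4: "Kle om l (incr b)" using b lV by auto
    have "Kle om (incr b') (incr b)" using Kle_trans[OF Kle_trans[OF k2 k1] k4] .
    then have "incr b = incr b'" using Kle_antisym[OF incr_simps(3) incr_simps(3) k3] by blast
    moreover have "b \<noteq> []" "b' \<noteq> []" using ne b(1) b'(1) VW by auto
    ultimately have "b = b'" using incr_inj by blast
    then show False using lt by simp
  qed
  let ?T = "butlast ` W"
  let ?Phi = "\<lambda>w u. \<Sum>v\<in>{v\<in>W. butlast v = u}. w v * real_of_int (last v)"
  have fT: "finite ?T" using fin by simp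
  have dec: "\<And>f. (\<Sum>v\<in>W. f v) = (\<Sum>u\<in>?T. \<Sum>v\<in>{v\<in>W. butlast v = u}. f v)"
    by (rule sum.group[OF fin fT order_refl, symmetric])
  have noGT': "\<not> GT w' w u" for u
  proof
    assume g: "GT w' w u"
    then obtain l' where "w' l' > 0" "butlast l' = u" unfolding GT_def by blast
    then have "l' \<in> W" using swW by auto
    then have uT: "u \<in> ?T" using \<open>butlast l' = u\<close> by blast
    have "(\<Sum>u\<in>?T. ?Phi w u) < (\<Sum>u\<in>?T. ?Phi w' u)"
    proof (rule sum_strict_mono_ex1[OF fT])
      show "\<forall>x\<in>?T. ?Phi w x \<le> ?Phi w' x"
        using fib_C(1)[OF fin swW(1) swW(2) nn nn' mass[rule_format] noGT] by blast
      show "\<exists>a\<in>?T. ?Phi w a < ?Phi w' a"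
        using fib_C(2)[OF fin swW(1) swW(2) nn nn' mass[rule_format] noGT g] uT by blast
    qed
    moreover have "(\<Sum>u\<in>?T. ?Phi w u) = (\<Sum>u\<in>?T. ?Phi w' u)" using phi dec[of "\<lambda>v. w v * real_of_int (last v)"] dec[of "\<lambda>v. w' v * real_of_int (last v)"] by simp
    ultimately show False by simp
  qed
  show "w = w'"
  proof
    fix v
    show "w v = w' v"
      by (rule fib_A[OF fin swW(1) swW(2) nn nn' ne mass[rule_format] noGT noGT', of v]) simp
  qed
qed


lemma eq_noGT:
  assumes sw: "\<forall>v. w v \<noteq> 0 \<longrightarrow> v \<in> V" and sw': "\<forall>v. w' v \<noteq> 0 \<longrightarrow> v \<in> V'"
    and ne: "\<forall>v\<in>V. v \<noteq> []" "b \<noteq> []"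
    and b: "\<forall>v\<in>V. Kle om b v \<and> Kle om v (incr b)"
    and b': "\<forall>v\<in>V'. Kle om b v \<and> Kle om v (incr b)"
    and u: "u \<noteq> butlast b"
  shows "\<not> GT w w' u"
proof
  assume "GT w w' u"
  then obtain l l' where ll: "w l > 0" "w' l' > 0" "butlast l = u" "butlast l' = u" "last l > last l'"
    unfolding GT_def by blast
  have lV: "l \<in> V" "l' \<in> V'" using ll sw sw' by auto
  have k1: "Kle om (incr l') l" using ll by (intro Kle_fiber_up) auto
  have k2: "Kle om (incr b) (incr l')" using b' lV by (intro Kle_incr) auto
  have k4: "Kle om l (incr b)" using b lV by auto
  have "Kle om (incr b) l" using k1 k2 Kle_trans by blast
  then have "l = incr b" using k4 Kle_antisym incr_simps(3) ne lV by blast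
  then show False using ll u incr_simps(1) by metis
qed


lemma case_eq:
  fixes w w' :: "vertex \<Rightarrow> real"
  assumes fin: "finite W" and sw: "\<forall>v. w v \<noteq> 0 \<longrightarrow> v \<in> V" and sw': "\<forall>v. w' v \<noteq> 0 \<longrightarrow> v \<in> V'"
    and VW: "V \<subseteq> W" "V' \<subseteq> W"
    and nn: "\<forall>v. 0 \<le> w v" and nn': "\<forall>v. 0 \<le> w' v"
    and ne: "\<forall>v\<in>W. v \<noteq> []"
    and mass: "\<forall>u. sum w {v\<in>W. butlast v = u} = sum w' {v\<in>W. butlast v = u}"
    and phi: "(\<Sum>v\<in>W. w v * real_of_int (last v)) = (\<Sum>v\<in>W. w' v * real_of_int (last v))"
    and b: "b \<in> V" "\<forall>v\<in>V. Kle om b v \<and> Kle om v (incr b)"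
    and b': "\<forall>v\<in>V'. Kle om b v \<and> Kle om v (incr b)"
  shows "w = w'"
proof -
  define u0 where "u0 = butlast b"
  have swW: "\<forall>v. w v \<noteq> 0 \<longrightarrow> v \<in> W" "\<forall>v. w' v \<noteq> 0 \<longrightarrow> v \<in> W" using sw sw' VW by auto
  have neV: "\<forall>v\<in>V. v \<noteq> []" "\<forall>v\<in>V'. v \<noteq> []" using ne VW by auto
  have bne: "b \<noteq> []" using b neV by auto
  have g1: "\<not> GT w w' u" if "u \<noteq> u0" for u
    using eq_noGT[OF sw sw' neV(1) bne b(2) b'] that u0_def by blast
  have g2: "\<not> GT w' w u" if "u \<noteq> u0" for u
    using eq_noGT[OF sw' sw neV(2) bne b' b(2)] that u0_def by blast
  have eqo: "w v = w' v" if "butlast v \<noteq> u0" for v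
    using fib_A[OF fin swW(1) swW(2) nn nn' ne mass[rule_format] g1[OF that] g2[OF that]] by simp
  have ib: "incr b = u0 @ [last b + 1]" unfolding incr_def u0_def by simp
  have bb: "b = u0 @ [last b]" unfolding u0_def using bne by simp
  have supp_gen: "v = b \<or> v = incr b" if V: "\<forall>v\<in>V. Kle om b v \<and> Kle om v (incr b)" "\<forall>v\<in>V. v \<noteq> []"
     and v: "v \<in> V" "butlast v = u0" for V v
  proof -
    have "last b \<le> last v" using Kle_fiber_last[of b v] V v u0_def by auto
    moreover have "last v \<le> last b + 1" using Kle_fiber_last[of v "incr b"] V v u0_def incr_simps by auto
    ultimately have "last v = last b \<or> last v = last b + 1" by linarith
    moreover have "v = u0 @ [last v]" using v(2) append_butlast_last_id[of v] V(2) v(1) by auto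
    ultimately show ?thesis using ib bb by auto
  qed
  have supp: "w v = 0" if "butlast v = u0" "v \<noteq> b" "v \<noteq> incr b" for v
    using supp_gen[OF b(2) neV(1), of v] that sw by blast
  have supp': "w' v = 0" if "butlast v = u0" "v \<noteq> b" "v \<noteq> incr b" for v
    using supp_gen[OF b' neV(2), of v] that sw' by blast
  let ?F = "{v\<in>W. butlast v = u0}"
  have finF: "finite ?F" using fin by simp
  have bF: "b \<in> ?F" using b VW u0_def by auto
  have bib: "b \<noteq> incr b"
  proof
    assume "b = incr b"
    then have "last b = last b + 1" using incr_simps(2)[of b] by simp
    then show False by simp
  qed
  have ibW: "incr b \<notin> ?F \<Longrightarrow> w (incr b) = 0 \<and> w' (incr b) = 0"
    using swW incr_simps(1)[of b] u0_def by auto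
  have tp: "sum h ?F = h b + h (incr b)" if hh: "\<forall>v. h v \<noteq> 0 \<longrightarrow> w v \<noteq> 0" for h :: "vertex \<Rightarrow> real"
  proof (rule two_pt[OF finF bF bib])
    show "\<forall>v\<in>?F. v \<noteq> b \<and> v \<noteq> incr b \<longrightarrow> h v = 0" using supp hh by auto
    show "incr b \<notin> ?F \<longrightarrow> h (incr b) = 0" using ibW hh by auto
  qed
  have tp': "sum h ?F = h b + h (incr b)" if hh: "\<forall>v. h v \<noteq> 0 \<longrightarrow> w' v \<noteq> 0" for h :: "vertex \<Rightarrow> real"
  proof (rule two_pt[OF finF bF bib])
    show "\<forall>v\<in>?F. v \<noteq> b \<and> v \<noteq> incr b \<longrightarrow> h v = 0" using supp' hh by auto
    show "incr b \<notin> ?F \<longrightarrow> h (incr b) = 0" using ibW hh by auto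
  qed
  have m1: "w b + w (incr b) = w' b + w' (incr b)"
    using tp[of w] tp'[of w'] mass[rule_format, of u0] by simp
  let ?T = "butlast ` W"
  let ?Phi = "\<lambda>w u. \<Sum>v\<in>{v\<in>W. butlast v = u}. w v * real_of_int (last v)"
  have fT: "finite ?T" using fin by simp
  have dec: "\<And>f. (\<Sum>v\<in>W. f v) = (\<Sum>u\<in>?T. \<Sum>v\<in>{v\<in>W. butlast v = u}. f v)"
    by (rule sum.group[OF fin fT order_refl, symmetric])
  have u0T: "u0 \<in> ?T" using bF by blast
  have "(\<Sum>u\<in>?T. ?Phi w u) = (\<Sum>u\<in>?T. ?Phi w' u)"
    using phi dec[of "\<lambda>v. w v * real_of_int (last v)"] dec[of "\<lambda>v. w' v * real_of_int (last v)"] by simp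
  moreover have "(\<Sum>u\<in>?T - {u0}. ?Phi w u) = (\<Sum>u\<in>?T - {u0}. ?Phi w' u)"
    by (rule sum.cong) (use eqo in auto)
  ultimately have "?Phi w u0 = ?Phi w' u0"
    using sum.remove[OF fT u0T, of "?Phi w"] sum.remove[OF fT u0T, of "?Phi w'"] by linarith
  moreover have "?Phi w u0 = w b * real_of_int (last b) + w (incr b) * real_of_int (last (incr b))"
    by (rule tp) auto
  moreover have "?Phi w' u0 = w' b * real_of_int (last b) + w' (incr b) * real_of_int (last (incr b))"
    by (rule tp') auto
  ultimately have m2: "w b * real_of_int (last b) + w (incr b) * (real_of_int (last b) + 1) =
     w' b * real_of_int (last b) + w' (incr b) * (real_of_int (last b) + 1)"
    using incr_simps(2)[of b] by simp
  have e1: "w (incr b) = w' (incr b)"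
  proof -
    have "(w b + w (incr b)) * real_of_int (last b) = (w' b + w' (incr b)) * real_of_int (last b)" using m1 by simp
    then show ?thesis using m2 by (simp add: algebra_simps)
  qed
  have e2: "w b = w' b" using m1 e1 by simp
  show "w = w'"
  proof
    fix v
    show "w v = w' v"
    proof (cases "butlast v = u0")
      case False then show ?thesis using eqo by blast
    next
      case True
      then show ?thesis using e1 e2 supp supp' by (cases "v = b"; cases "v = incr b") auto
    qed
  qed
qed


theorem Win_unique:
  "Win wq m V \<Longrightarrow> Win wq m V' \<Longrightarrow> rep V w p \<Longrightarrow> rep V' w' p \<Longrightarrow> w = w'"
proof (induct m arbitrary: V V' w w' p)
  case 0
  have V: "V = {[]}" "V' = {[]}" using 0(1,2) by simp_all
  have s: "\<forall>v. w v \<noteq> 0 \<longrightarrow> v \<in> V" "sum w V = 1" "\<forall>v. w' v \<noteq> 0 \<longrightarrow> v \<in> V'" "sum w' V' = 1"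
    using 0(3,4) unfolding rep_def by blast+
  show ?case
  proof
    fix v
    show "w v = w' v"
    proof (cases "v = []")
      case True then show ?thesis using s V by simp
    next
      case False then show ?thesis using s(1,3) V by (metis singletonD)
    qed
  qed
next
  case (Suc m)
  from Suc(2) obtain B where B: "Win wq m B" "\<forall>v\<in>V. length v = Suc m \<and> butlast v \<in> B" and fV: "finite V" by auto
  from Suc(2) obtain b where b: "b \<in> V" "\<forall>v\<in>V. Kle (wq m) b v \<and> Kle (wq m) v (incr b)" by auto
  from Suc(3) obtain B' where B': "Win wq m B'" "\<forall>v\<in>V'. length v = Suc m \<and> butlast v \<in> B'" and fV': "finite V'" by auto
  from Suc(3) obtain b' where b': "b' \<in> V'" "\<forall>v\<in>V'. Kle (wq m) b' v \<and> Kle (wq m) v (incr b')" by auto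
  have r: "rep V w p" "rep V' w' p" by fact+
  have nu: "(\<lambda>u. sum w {v\<in>V. butlast v = u}) = (\<lambda>u. sum w' {v\<in>V'. butlast v = u})"
    by (rule Suc(1)[OF B(1) B'(1) rep_base[OF r(1) fV Win_finite[OF B(1)] B(2)] rep_base[OF r(2) fV' Win_finite[OF B'(1)] B'(2)]])
  define W where "W = V \<union> V'"
  have fin: "finite W" using fV fV' W_def by simp
  have sw: "\<forall>v. w v \<noteq> 0 \<longrightarrow> v \<in> V" "\<forall>v. w' v \<noteq> 0 \<longrightarrow> v \<in> V'" "\<forall>v. 0 \<le> w v" "\<forall>v. 0 \<le> w' v"
    using r unfolding rep_def by auto
  have VW: "V \<subseteq> W" "V' \<subseteq> W" unfolding W_def by auto
  have len: "\<forall>v\<in>W. length v = Suc m" using B(2) B'(2) W_def by auto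
  then have ne: "\<forall>v\<in>W. v \<noteq> []" by auto
  have mass: "\<forall>u. sum w {v\<in>W. butlast v = u} = sum w' {v\<in>W. butlast v = u}"
  proof
    fix u
    have "sum w {v\<in>W. butlast v = u} = sum w {v\<in>V. butlast v = u}" by (rule fib_ext[OF fin VW(1) sw(1)])
    also have "\<dots> = sum w' {v\<in>V'. butlast v = u}" using fun_cong[OF nu, of u] by simp
    also have "\<dots> = sum w' {v\<in>W. butlast v = u}" by (rule fib_ext[OF fin VW(2) sw(2), symmetric])
    finally show "sum w {v\<in>W. butlast v = u} = sum w' {v\<in>W. butlast v = u}" .
  qed
  have pl: "p (Suc m) = (\<Sum>v\<in>W. w v * real_of_int (last v))"
  proof -
    have "p (Suc m) = (\<Sum>v\<in>V. w v * vpt v (Suc m))" using r(1) unfolding rep_def by simp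
    also have "\<dots> = (\<Sum>v\<in>V. w v * real_of_int (last v))" using B(2) vpt_last by (auto intro: sum.cong)
    also have "\<dots> = (\<Sum>v\<in>W. w v * real_of_int (last v))"
      by (rule sum.mono_neutral_left) (use fin VW sw in auto)
    finally show ?thesis .
  qed
  have pl': "p (Suc m) = (\<Sum>v\<in>W. w' v * real_of_int (last v))"
  proof -
    have "p (Suc m) = (\<Sum>v\<in>V'. w' v * vpt v (Suc m))" using r(2) unfolding rep_def by simp
    also have "\<dots> = (\<Sum>v\<in>V'. w' v * real_of_int (last v))" using B'(2) vpt_last by (auto intro: sum.cong)
    also have "\<dots> = (\<Sum>v\<in>W. w' v * real_of_int (last v))"
      by (rule sum.mono_neutral_left) (use fin VW sw in auto)
    finally show ?thesis .
  qed
  have phi: "(\<Sum>v\<in>W. w v * real_of_int (last v)) = (\<Sum>v\<in>W. w' v * real_of_int (last v))" using pl pl' by simp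
  have "length b = length b'" using b b' B(2) B'(2) by auto
  then consider "b = b'" | "Kle (wq m) b b'" "b \<noteq> b'" | "Kle (wq m) b' b" "b' \<noteq> b"
    using Kle_total by blast
  then show ?case
  proof cases
    case 1
    show ?thesis by (rule case_eq[OF fin sw(1) sw(2) VW sw(3) sw(4) ne mass phi b]) (use b' 1 in simp)
  next
    case 2
    show ?thesis by (rule case_lt[OF fin sw(1) sw(2) VW sw(3) sw(4) ne mass phi b b' 2])
  next
    case 3
    have "w' = w"
      by (rule case_lt[OF fin sw(2) sw(1) VW(2) VW(1) sw(4) sw(3) ne _ _ b' b 3])
         (use mass phi in auto)
    then show ?thesis by simp
  qed
qed


lemma incr_shiftv: assumes "v \<noteq> []" shows "incr (shiftv lam v) = shiftv lam (incr v)"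
proof (cases v rule: rev_cases)
  case Nil then show ?thesis using assms by simp
next
  case (snoc u z) then show ?thesis by (simp add: incr_def shiftv_snoc)
qed

lemma Kle_shiftv:
  assumes hw: "\<forall>u. length u = m \<longrightarrow> om (shiftv lam u) = om u + c"
    and len: "length x = Suc m" "length y = Suc m"
  shows "Kle om (shiftv lam x) (shiftv lam y) = Kle om x y"
proof -
  have o: "ovl om (shiftv lam v) = ovl om v + real_of_int (lam (Suc m)) + c" if "length v = Suc m" for v
  proof -
    have "v \<noteq> []" using that by auto
    then show ?thesis using that hw last_shiftv[of v lam] unfolding ovl_def by (auto simp: butlast_shiftv)
  qed
  have bl: "butlast (shiftv lam x) = butlast (shiftv lam y) \<longleftrightarrow> butlast x = butlast y"
    using shiftv_inj[of "butlast x" "butlast y" lam] len by (auto simp: butlast_shiftv)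
  have lx: "lexlt (butlast (shiftv lam y)) (butlast (shiftv lam x)) = lexlt (butlast y) (butlast x)"
    using lexlt_shiftv[of "butlast y" "butlast x" lam] len by (simp add: butlast_shiftv)
  show ?thesis unfolding Kle_def o[OF len(1)] o[OF len(2)] bl lx by simp
qed

lemma Win_shiftv:
  "Win wq m V \<Longrightarrow> (\<forall>s<m. \<exists>c. \<forall>u. length u = s \<longrightarrow> wq s (shiftv lam u) = wq s u + c) \<Longrightarrow>
     Win wq m (shiftv lam ` V)"
proof (induct m arbitrary: V)
  case 0 then show ?case by simp
next
  case (Suc m)
  from Suc(2) obtain B where B: "Win wq m B" "\<forall>v\<in>V. length v = Suc m \<and> butlast v \<in> B" and fV: "finite V" by auto
  from Suc(2) obtain b where b: "b \<in> V" "\<forall>v\<in>V. Kle (wq m) b v \<and> Kle (wq m) v (incr b)" by auto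
  have IH: "Win wq m (shiftv lam ` B)" using Suc(1)[OF B(1)] Suc(3) by auto
  obtain c where c: "\<forall>u. length u = m \<longrightarrow> wq m (shiftv lam u) = wq m u + c" using Suc(3) by blast
  have blen: "length b = Suc m" using B b by auto
  have "\<forall>v\<in>shiftv lam ` V. length v = Suc m \<and> butlast v \<in> shiftv lam ` B"
    using B(2) by (auto simp: butlast_shiftv)
  moreover have "\<forall>v\<in>shiftv lam ` V. Kle (wq m) (shiftv lam b) v \<and> Kle (wq m) v (incr (shiftv lam b))"
  proof
    fix v assume "v \<in> shiftv lam ` V"
    then obtain x where x: "x \<in> V" "v = shiftv lam x" by blast
    have lx: "length x = Suc m" using B x by auto
    have li: "length (incr b) = Suc m" using blen incr_simps(4)[of b] by simp
    show "Kle (wq m) (shiftv lam b) v \<and> Kle (wq m) v (incr (shiftv lam b))"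
    proof -
      have "b \<noteq> []" using blen by auto
      then have ib: "incr (shiftv lam b) = shiftv lam (incr b)" by (rule incr_shiftv)
      show ?thesis unfolding x(2) ib
      using Kle_shiftv[OF c blen lx] Kle_shiftv[OF c lx li] b x by auto
    qed
  qed
  ultimately show ?case using fV IH b(1) by auto
qed

lemma oms_shift:
  assumes "s < r1 + 2 * r2 - 1"
  shows "\<exists>c. \<forall>u. length u = s \<longrightarrow> oms r1 r2 tau eps N s (shiftv lam u) = oms r1 r2 tau eps N s u + c"
proof (cases "s < r1 + r2 - 1")
  case True then show ?thesis by (simp add: oms_def)
next
  case False
  let ?j = "s - (r1 + r2 - 1) + 1"
  let ?C = "real (N ?j) / (2 * pi)"
  let ?c = "?C * (\<Sum>l\<in>{1..r1+r2-1}. real_of_int (lam l) * Arg (tau (r1 + ?j) (eps l)))"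
  show ?thesis
  proof (intro exI allI impI)
    fix u :: vertex assume lu: "length u = s"
    have "\<And>l. l \<in> {1..r1+r2-1} \<Longrightarrow> shiftv lam u ! (l - 1) = u ! (l - 1) + lam l"
      using False lu by (subst nth_shiftv) auto
    then have "(\<Sum>l\<in>{1..r1+r2-1}. real_of_int (shiftv lam u ! (l - 1)) * Arg (tau (r1 + ?j) (eps l))) =
       (\<Sum>l\<in>{1..r1+r2-1}. real_of_int (u ! (l - 1)) * Arg (tau (r1 + ?j) (eps l))) +
       (\<Sum>l\<in>{1..r1+r2-1}. real_of_int (lam l) * Arg (tau (r1 + ?j) (eps l)))"
      by (simp add: sum.distrib[symmetric] algebra_simps)
    then show "oms r1 r2 tau eps N s (shiftv lam u) = oms r1 r2 tau eps N s u + ?c"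
      using False by (simp add: oms_def omega_j_def algebra_simps)
  qed
qed


lemma hom_0: "is_ring_hom_C s \<Longrightarrow> s 0 = 0"
  unfolding is_ring_hom_C_def by (metis add.right_neutral add_left_cancel)

lemma hom_inverse: assumes h: "is_ring_hom_C s" shows "s (inverse x) = inverse (s x)"
proof (cases "x = 0")
  case True then show ?thesis using hom_0[OF h] by simp
next
  case False
  have "s x * s (inverse x) = 1" using h False unfolding is_ring_hom_C_def by (metis right_inverse)
  then show ?thesis by (simp add: inverse_unique)
qed

lemma hom_nz: assumes h: "is_ring_hom_C s" "x \<noteq> 0" shows "s x \<noteq> 0"
proof -
  have "s x * s (inverse x) = 1" using h unfolding is_ring_hom_C_def by (metis right_inverse)
  then show ?thesis by auto
qed

lemma hom_power: assumes h: "is_ring_hom_C s" shows "s (x ^ n) = s x ^ n"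
  using h unfolding is_ring_hom_C_def by (induct n) auto

lemma hom_powi: assumes h: "is_ring_hom_C s" shows "s (x powi k) = s x powi k"
  unfolding power_int_def using hom_power[OF h] hom_inverse[OF h] by simp

lemma hom_prod: assumes h: "is_ring_hom_C s" and "finite A" shows "s (prod f A) = (\<Prod>a\<in>A. s (f a))"
  using assms(2) by (induct A rule: finite_induct) (use h in \<open>auto simp: is_ring_hom_C_def\<close>)

lemma hom_mult: "is_ring_hom_C s \<Longrightarrow> s (x * y) = s x * s y"
  unfolding is_ring_hom_C_def by blast

lemma eps_pow_add:
  assumes "\<forall>l\<in>{1..r}. eps l \<noteq> 0"
  shows "eps_pow r eps (\<lambda>l. x l + y l) = eps_pow r eps x * eps_pow r eps y"
  unfolding eps_pow_def using assms by (simp add: power_int_add prod.distrib[symmetric])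

lemma polar_shift:
  assumes "Z = complex_of_real r * exp (\<i> * complex_of_real A)"
  shows "exp (2 * complex_of_real pi * \<i> * complex_of_real al) * Z =
     complex_of_real r * exp (2 * complex_of_real pi * \<i> * complex_of_real (al + A / (2 * pi)))"
proof -
  have "2 * complex_of_real pi * \<i> * complex_of_real (al + A / (2 * pi)) =
      2 * complex_of_real pi * \<i> * complex_of_real al + \<i> * complex_of_real A"
    using pi_gt_zero by (simp add: field_simps)
  then show ?thesis using assms by (simp add: exp_add algebra_simps)
qed

lemma sector_sum:
  fixes t :: "nat \<Rightarrow> real" and z :: "nat \<Rightarrow> complex"
  assumes t: "\<forall>i<n. 0 \<le> t i" "(\<Sum>i<n. t i) = 1" and e: "e > 0"
    and z: "\<forall>i<n. \<exists>\<rho>>0. \<exists>\<theta>. -1/4 < \<theta> \<and> \<theta> < 1/4 \<and>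
              z i = complex_of_real \<rho> * exp (2 * complex_of_real pi * \<i> * complex_of_real (al + \<theta>))"
  shows "complex_of_real e * (\<Sum>i<n. complex_of_real (t i) * z i) \<in> Hsect al"
proof -
  let ?mu = "exp (2 * complex_of_real pi * \<i> * complex_of_real al)"
  have "\<forall>i<n. \<exists>q. Re q > 0 \<and> z i = ?mu * q"
  proof (intro allI impI)
    fix i assume "i < n"
    then obtain \<rho> \<theta> where r: "\<rho> > 0" "-1/4 < \<theta>" "\<theta> < 1/4"
      "z i = complex_of_real \<rho> * exp (2 * complex_of_real pi * \<i> * complex_of_real (al + \<theta>))" using z by blast
    let ?q = "complex_of_real \<rho> * exp (\<i> * complex_of_real (2 * pi * \<theta>))"
    have "Re ?q = \<rho> * cos (2 * pi * \<theta>)" by (simp add: Re_exp)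
    moreover have "cos (2 * pi * \<theta>) > 0"
    proof -
      have a1: "2*pi*(-1/4) < 2*pi*\<theta>" using r(2) pi_gt_zero by (intro mult_strict_left_mono) auto
      have a2: "2*pi*\<theta> < 2*pi*(1/4)" using r(3) pi_gt_zero by (intro mult_strict_left_mono) auto
      show ?thesis by (rule cos_gt_zero_pi) (use a1 a2 in auto)
    qed
    ultimately have "Re ?q > 0" using r by simp
    moreover have "z i = ?mu * ?q" unfolding r(4) by (simp add: exp_add[symmetric] algebra_simps)
    ultimately show "\<exists>q. Re q > 0 \<and> z i = ?mu * q" by blast
  qed
  then obtain q where q: "\<forall>i<n. Re (q i) > 0 \<and> z i = ?mu * q i" by metis
  let ?Z = "complex_of_real e * (\<Sum>i<n. complex_of_real (t i) * q i)"
  have eq: "complex_of_real e * (\<Sum>i<n. complex_of_real (t i) * z i) = ?mu * ?Z"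
    using q by (simp add: sum_distrib_left algebra_simps)
  obtain i0 where i0: "i0 < n" "t i0 \<noteq> 0"
  proof -
    have "\<not> (\<forall>i<n. t i = 0)"
    proof
      assume "\<forall>i<n. t i = 0"
      then have "(\<Sum>i<n. t i) = 0" by simp
      then show False using t(2) by simp
    qed
    then show ?thesis using that by blast
  qed
  have "Re (\<Sum>i<n. complex_of_real (t i) * q i) = (\<Sum>i<n. t i * Re (q i))" by (simp add: Re_sum)
  also have "\<dots> > 0"
    by (rule sum_pos2[of _ i0]) (use i0 t q in \<open>auto intro!: mult_nonneg_nonneg mult_pos_pos simp: less_eq_real_def\<close>)
  finally have "Re ?Z > 0" using e by simp
  then have Z0: "?Z \<noteq> 0" by (metis zero_complex.simps(1) less_irrefl)
  have ab: "\<bar>Arg ?Z\<bar> < pi / 2" using \<open>Re ?Z > 0\<close> Arg_Re_pos by blast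
  have "?Z = complex_of_real (norm ?Z) * exp (\<i> * complex_of_real (Arg ?Z))" by (rule Arg_eq[OF Z0])
  then have "?mu * ?Z = complex_of_real (norm ?Z) *
      exp (2 * complex_of_real pi * \<i> * complex_of_real (al + Arg ?Z / (2 * pi)))"
    by (rule polar_shift)
  moreover have "-1/4 < Arg ?Z / (2 * pi)" "Arg ?Z / (2 * pi) < 1/4" using ab pi_gt_zero
    by (auto simp: field_simps abs_less_iff)
  moreover have "norm ?Z > 0" using Z0 by simp
  ultimately show ?thesis unfolding eq Hsect_def by blast
qed


lemma polar_powi: "(complex_of_real a * exp b) powi k = complex_of_real (a powi k) * exp (of_int k * b)"
  by (simp add: power_int_mult_distrib exp_power_int)

lemma polar_prod:
  "finite A \<Longrightarrow> (\<Prod>l\<in>A. complex_of_real (a l) * exp (b l)) = complex_of_real (\<Prod>l\<in>A. a l) * exp (\<Sum>l\<in>A. b l)"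
  by (induct A rule: finite_induct) (auto simp: exp_add algebra_simps)

lemma vertex_angle:
  fixes tau :: "nat \<Rightarrow> 'a::field_char_0 \<Rightarrow> complex"
  assumes hom: "is_ring_hom_C (tau (r1 + j))" and j: "j \<in> {1..r2}"
    and epsnz: "\<forall>l\<in>{1..r1+r2-1}. eps l \<noteq> 0"
    and tw: "twister r1 r2 tau N beta"
    and X: "X \<in> int_points (r1 + r2 - 1 + r2)" and N3: "N j \<ge> 3"
  shows "\<exists>\<rho>>0. \<exists>t. \<bar>t\<bar> / real (N j) < 1/4 - 1 / (2 * real (N j)) \<and>
     tau (r1 + j) (beta X * eps_pow (r1+r2-1) eps X) = complex_of_real \<rho> *
       exp (2 * complex_of_real pi * \<i> * complex_of_real
         ((real_of_int (X (r1 + r2 - 1 + j)) + real (N j) / (2 * pi) *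
            (\<Sum>l\<in>{1..r1+r2-1}. real_of_int (X l) * Arg (tau (r1 + j) (eps l))) + t) / real (N j)))"
proof -
  let ?s = "tau (r1 + j)"
  let ?R = "r1 + r2 - 1"
  let ?Nj = "real (N j)"
  from tw X j obtain t where t: "\<bar>t\<bar> / ?Nj < 1/4 - 1 / (2 * ?Nj)"
    "?s (beta X) / complex_of_real (cmod (?s (beta X))) =
      exp (2 * complex_of_real pi * \<i> * complex_of_real ((real_of_int (X (?R + j)) + t) / ?Nj))"
    unfolding twister_def Let_def by blast
  have "totally_positive r1 tau (beta X)" using tw X unfolding twister_def Let_def by blast
  then have bnz: "beta X \<noteq> 0" unfolding totally_positive_def by blast
  have sbnz: "?s (beta X) \<noteq> 0" by (rule hom_nz[OF hom bnz])
  have sb: "?s (beta X) = complex_of_real (cmod (?s (beta X))) *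
      exp (2 * complex_of_real pi * \<i> * complex_of_real ((real_of_int (X (?R + j)) + t) / ?Nj))"
    using t(2) sbnz by (simp add: field_simps)
  have se: "?s (eps_pow ?R eps X) = (\<Prod>l\<in>{1..?R}. ?s (eps l) powi X l)"
    unfolding eps_pow_def hom_prod[OF hom finite_atLeastAtMost] hom_powi[OF hom] ..
  also have "\<dots> = (\<Prod>l\<in>{1..?R}. complex_of_real (cmod (?s (eps l)) powi X l) *
        exp (of_int (X l) * (\<i> * complex_of_real (Arg (?s (eps l))))))"
  proof (rule prod.cong[OF refl])
    fix l assume l: "l \<in> {1..?R}"
    have "?s (eps l) \<noteq> 0" using hom_nz[OF hom] epsnz l by blast
    then have "?s (eps l) = complex_of_real (cmod (?s (eps l))) * exp (\<i> * complex_of_real (Arg (?s (eps l))))"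
      by (rule Arg_eq)
    then show "?s (eps l) powi X l = complex_of_real (cmod (?s (eps l)) powi X l) *
        exp (of_int (X l) * (\<i> * complex_of_real (Arg (?s (eps l)))))"
      by (metis polar_powi)
  qed
  also have "\<dots> = complex_of_real (\<Prod>l\<in>{1..?R}. cmod (?s (eps l)) powi X l) *
      exp (\<Sum>l\<in>{1..?R}. of_int (X l) * (\<i> * complex_of_real (Arg (?s (eps l)))))"
    by (rule polar_prod) simp
  finally have se': "?s (eps_pow ?R eps X) = complex_of_real (\<Prod>l\<in>{1..?R}. cmod (?s (eps l)) powi X l) *
      exp (\<Sum>l\<in>{1..?R}. of_int (X l) * (\<i> * complex_of_real (Arg (?s (eps l)))))" .
  define \<rho> where "\<rho> = cmod (?s (beta X)) * (\<Prod>l\<in>{1..?R}. cmod (?s (eps l)) powi X l)"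
  have rpos: "\<rho> > 0" unfolding \<rho>_def using sbnz hom_nz[OF hom] epsnz
    by (intro mult_pos_pos prod_pos) auto
  have Npos: "?Nj > 0" using N3 by simp
  have ex: "2 * complex_of_real pi * \<i> * complex_of_real ((real_of_int (X (?R + j)) + t) / ?Nj) +
      (\<Sum>l\<in>{1..?R}. of_int (X l) * (\<i> * complex_of_real (Arg (?s (eps l))))) =
     2 * complex_of_real pi * \<i> * complex_of_real
         ((real_of_int (X (?R + j)) + ?Nj / (2 * pi) *
            (\<Sum>l\<in>{1..?R}. real_of_int (X l) * Arg (?s (eps l))) + t) / ?Nj)"
    using Npos pi_gt_zero by (simp add: field_simps sum_distrib_left sum_distrib_right)
  have "?s (beta X * eps_pow ?R eps X) = ?s (beta X) * ?s (eps_pow ?R eps X)" by (rule hom_mult[OF hom])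
  also have "\<dots> = complex_of_real \<rho> * exp (2 * complex_of_real pi * \<i> * complex_of_real
         ((real_of_int (X (?R + j)) + ?Nj / (2 * pi) *
            (\<Sum>l\<in>{1..?R}. real_of_int (X l) * Arg (?s (eps l))) + t) / ?Nj))"
    unfolding ex[symmetric] exp_add \<rho>_def by (subst sb, subst se') (simp add: algebra_simps)
  finally show ?thesis using rpos t(1) by blast
qed


definition lw :: "vertex list \<Rightarrow> (nat \<Rightarrow> real) \<Rightarrow> vertex \<Rightarrow> real" where
  "lw L t v = sum t {i. i < length L \<and> L ! i = v}"

lemma list_sum:
  fixes g :: "vertex \<Rightarrow> 'b::real_vector"
  shows "(\<Sum>v\<in>set L. lw L t v *\<^sub>R g v) = (\<Sum>i<length L. t i *\<^sub>R g (L ! i))"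
proof -
  have sub: "(!) L ` {..<length L} \<subseteq> set L" by auto
  have "(\<Sum>i<length L. t i *\<^sub>R g (L ! i)) = (\<Sum>v\<in>set L. \<Sum>i\<in>{x \<in> {..<length L}. L ! x = v}. t i *\<^sub>R g (L ! i))"
    using sum.group[OF finite_lessThan finite_set sub, of "\<lambda>i. t i *\<^sub>R g (L ! i)"] by simp
  also have "\<dots> = (\<Sum>v\<in>set L. lw L t v *\<^sub>R g v)"
  proof (rule sum.cong[OF refl])
    fix v assume "v \<in> set L"
    have "(\<Sum>i\<in>{x \<in> {..<length L}. L ! x = v}. t i *\<^sub>R g (L ! i)) = (\<Sum>i\<in>{x \<in> {..<length L}. L ! x = v}. t i *\<^sub>R g v)"
      by (rule sum.cong) auto
    also have "\<dots> = lw L t v *\<^sub>R g v" unfolding lw_def by (simp add: scaleR_sum_left)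
    finally show "(\<Sum>i\<in>{x \<in> {..<length L}. L ! x = v}. t i *\<^sub>R g (L ! i)) = lw L t v *\<^sub>R g v" .
  qed
  finally show ?thesis by simp
qed

lemma list_sum_real:
  "(\<Sum>v\<in>set L. lw L t v * g v) = (\<Sum>i<length L. t i * (g (L ! i) :: real))"
  using list_sum[of L t g] by simp

lemma list_sum_cpx:
  "(\<Sum>v\<in>set L. complex_of_real (lw L t v) * g v) = (\<Sum>i<length L. complex_of_real (t i) * (g (L ! i) :: complex))"
  using list_sum[of L t g] by (simp add: scaleR_conv_of_real)

lemma lw_rep:
  assumes "\<forall>i<length L. 0 \<le> t i" "(\<Sum>i<length L. t i) = 1"
  shows "rep (set L) (lw L t) (\<lambda>l. \<Sum>i<length L. t i * vpt (L ! i) l)"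
  unfolding rep_def
proof (intro conjI allI impI)
  fix v assume a: "lw L t v \<noteq> 0"
  show "v \<in> set L"
  proof (rule ccontr)
    assume "v \<notin> set L"
    then have "{i. i < length L \<and> L ! i = v} = {}" by (auto simp: in_set_conv_nth)
    then have "lw L t v = 0" unfolding lw_def by (simp only: sum.empty)
    then show False using a by simp
  qed
next
  fix v show "0 \<le> lw L t v" unfolding lw_def using assms by (auto intro: sum_nonneg)
next
  show "sum (lw L t) (set L) = 1" using list_sum_real[of L t "\<lambda>_. 1"] assms by simp
next
  show "(\<lambda>l. \<Sum>i<length L. t i * vpt (L ! i) l) = (\<lambda>l. \<Sum>v\<in>set L. lw L t v * vpt v l)"
    using list_sum_real[of L t] by simp
qed

lemma Omega_lin:
  "Omega r1 r2 tau eps N j (\<lambda>l. \<Sum>i<n. t i * g i l) = (\<Sum>i<n. t i * Omega r1 r2 tau eps N j (g i))"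
proof -
  have "(\<Sum>l\<in>{1..r1+r2-1}. (\<Sum>i<n. t i * g i l) * Arg (tau (r1 + j) (eps l))) =
        (\<Sum>l\<in>{1..r1+r2-1}. \<Sum>i<n. t i * (g i l * Arg (tau (r1 + j) (eps l))))"
    by (rule sum.cong[OF refl]) (simp add: sum_distrib_right mult.assoc)
  also have "\<dots> = (\<Sum>i<n. \<Sum>l\<in>{1..r1+r2-1}. t i * (g i l * Arg (tau (r1 + j) (eps l))))"
    by (rule sum.swap)
  also have "\<dots> = (\<Sum>i<n. t i * (\<Sum>l\<in>{1..r1+r2-1}. g i l * Arg (tau (r1 + j) (eps l))))"
    by (simp add: sum_distrib_left)
  finally have "(\<Sum>l\<in>{1..r1+r2-1}. (\<Sum>i<n. t i * g i l) * Arg (tau (r1 + j) (eps l))) =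
        (\<Sum>i<n. t i * (\<Sum>l\<in>{1..r1+r2-1}. g i l * Arg (tau (r1 + j) (eps l))))" .
  then show ?thesis unfolding Omega_def
    by (simp add: sum.distrib sum_distrib_left algebra_simps)
qed

lemma vpt_vint: "vpt v l = real_of_int (vint v l)"
  unfolding vpt_def vint_def by simp

lemma vint_int_points: "vint v \<in> int_points (length v)"
  unfolding vint_def int_points_def by auto

lemma Omega_vertex:
  assumes len: "length v = r1 + 2 * r2 - 1" and R1: "r1 + r2 \<ge> 1" and j: "j \<in> {1..r2}"
  shows "Omega r1 r2 tau eps N j (vpt v) = ovl (oms r1 r2 tau eps N (r1 + r2 - 1 + j - 1)) (take (r1 + r2 - 1 + j) v)"
proof -
  let ?R = "r1 + r2 - 1"
  have j1: "j \<ge> 1" "j \<le> r2" using j by auto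
  have om: "oms r1 r2 tau eps N (?R + j - 1) = omega_j r1 r2 tau eps N j"
    unfolding oms_def using j1 by auto
  have lt: "last (take (?R + j) v) = v ! (?R + j - 1)"
    using len j1 R1 by (subst last_conv_nth) auto
  have bt: "butlast (take (?R + j) v) = take (?R + j - 1) v"
    using len j1 R1 by (simp add: butlast_take)
  have "\<And>l. l \<in> {1..?R} \<Longrightarrow> take (?R + j - 1) v ! (l - 1) = v ! (l - 1)"
    using j1 by auto
  moreover have "\<And>l. l \<in> {1..?R} \<Longrightarrow> vpt v l = real_of_int (v ! (l - 1))"
    using len j1 unfolding vpt_def by auto
  ultimately have s: "(\<Sum>l\<in>{1..?R}. vpt v l * Arg (tau (r1 + j) (eps l))) =
     (\<Sum>l\<in>{1..?R}. real_of_int (take (?R + j - 1) v ! (l - 1)) * Arg (tau (r1 + j) (eps l)))"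
    by (intro sum.cong) auto
  have vR: "vpt v (?R + j) = real_of_int (v ! (?R + j - 1))"
    using len j1 R1 unfolding vpt_def by auto
  show ?thesis unfolding Omega_def ovl_def om omega_j_def lt bt vR s by simp
qed

definition posr :: "complex \<Rightarrow> bool" where "posr z \<longleftrightarrow> (\<exists>r>0. z = complex_of_real r)"

lemma posr_mult: "posr a \<Longrightarrow> posr b \<Longrightarrow> posr (a * b)"
  unfolding posr_def by (metis mult_pos_pos of_real_mult)

lemma posr_powi: "posr a \<Longrightarrow> posr (a powi k)"
  unfolding posr_def by (metis of_real_power_int zero_less_power_int)

lemma posr_prod: "finite A \<Longrightarrow> (\<forall>a\<in>A. posr (f a)) \<Longrightarrow> posr (prod f A)"
proof (induct A rule: finite_induct)
  case empty then show ?case unfolding posr_def by (intro exI[of _ 1]) simp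
next
  case (insert x F) then show ?case by (simp add: posr_mult)
qed

lemma posr_iff: "posr z \<longleftrightarrow> z \<in> \<real> \<and> Re z > 0"
  unfolding posr_def by (metis Reals_cases Reals_of_real of_real_Re Re_complex_of_real)

lemma real_coord:
  fixes tau :: "nat \<Rightarrow> 'a::field_char_0 \<Rightarrow> complex"
  assumes hom: "is_ring_hom_C (tau c)" and c: "c \<in> {1..r1}"
    and tb: "totally_positive r1 tau b" and te: "\<forall>l\<in>{1..R}. totally_positive r1 tau (eps l)"
  shows "posr (tau c (b * eps_pow R eps X))"
proof -
  have pb: "posr (tau c b)" using tb c unfolding totally_positive_def posr_iff by blast
  have pe: "\<forall>l\<in>{1..R}. posr (tau c (eps l) powi X l)"
  proof
    fix l assume "l \<in> {1..R}"
    then have "posr (tau c (eps l))" using te c unfolding totally_positive_def posr_iff by blast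
    then show "posr (tau c (eps l) powi X l)" by (rule posr_powi)
  qed
  have "tau c (eps_pow R eps X) = (\<Prod>l\<in>{1..R}. tau c (eps l) powi X l)"
    unfolding eps_pow_def hom_prod[OF hom finite_atLeastAtMost] hom_powi[OF hom] ..
  then have "posr (tau c (eps_pow R eps X))" using pe posr_prod[of "{1..R}"] by simp
  then show ?thesis using hom_mult[OF hom] pb posr_mult by metis
qed

lemma real_sum:
  fixes t :: "nat \<Rightarrow> real" and z :: "nat \<Rightarrow> complex"
  assumes t: "\<forall>i<n. 0 \<le> t i" "(\<Sum>i<n. t i) = 1" and e: "e > 0" and z: "\<forall>i<n. posr (z i)"
  shows "posr (complex_of_real e * (\<Sum>i<n. complex_of_real (t i) * z i))"
proof -
  obtain r where r: "\<forall>i<n. r i > 0 \<and> z i = complex_of_real (r i)" using z unfolding posr_def by metis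
  have "(\<Sum>i<n. complex_of_real (t i) * z i) = complex_of_real (\<Sum>i<n. t i * r i)"
    using r by simp
  moreover obtain i0 where i0: "i0 < n" "t i0 \<noteq> 0"
  proof -
    have "\<not> (\<forall>i<n. t i = 0)"
    proof
      assume "\<forall>i<n. t i = 0"
      then have "(\<Sum>i<n. t i) = 0" by simp
      then show False using t(2) by simp
    qed
    then show ?thesis using that by blast
  qed
  moreover have "(\<Sum>i<n. t i * r i) > 0"
    by (rule sum_pos2[of _ i0]) (use i0 t r in \<open>auto intro!: mult_nonneg_nonneg mult_pos_pos simp: less_eq_real_def\<close>)
  ultimately show ?thesis unfolding posr_def using e
    by (metis mult_pos_pos of_real_mult)
qed


lemma nf_R1: assumes "number_field_emb r1 r2 (tau :: nat \<Rightarrow> 'a::field_char_0 \<Rightarrow> complex)" shows "r1 + r2 \<ge> 1"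
proof (rule ccontr)
  assume "\<not> r1 + r2 \<ge> 1"
  then have z: "r1 + 2 * r2 = 0" by simp
  have "\<exists>b :: nat \<Rightarrow> 'a.
        (\<forall>x. \<exists>q :: nat \<Rightarrow> rat. x = (\<Sum>i<r1 + 2*r2. of_rat (q i) * b i)) \<and>
        (\<forall>q :: nat \<Rightarrow> rat. (\<Sum>i<r1 + 2*r2. of_rat (q i) * b i) = 0 \<longrightarrow> (\<forall>i<r1 + 2*r2. q i = 0))"
    using assms unfolding number_field_emb_def by (elim conjE)
  then obtain b :: "nat \<Rightarrow> 'a" where "\<forall>x. \<exists>q :: nat \<Rightarrow> rat. x = (\<Sum>i<r1 + 2*r2. of_rat (q i) * b i)"
    by blast
  then obtain q :: "nat \<Rightarrow> rat" where "(1::'a) = (\<Sum>i<r1 + 2*r2. of_rat (q i) * b i)" by blast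
  then have "(1::'a) = 0" using z by simp
  then show False by simp
qed

lemma nf_hom: assumes "number_field_emb r1 r2 tau" "i \<in> {1..r1+r2}" shows "is_ring_hom_C (tau i)"
proof -
  have "\<forall>i\<in>{1..r1+r2}. is_ring_hom_C (tau i)" using assms(1) unfolding number_field_emb_def by (elim conjE)
  then show ?thesis using assms(2) by blast
qed

lemma conv_bounds:
  fixes t f :: "nat \<Rightarrow> real"
  assumes "\<forall>i<n. 0 \<le> t i" "(\<Sum>i<n. t i) = 1" "\<forall>i<n. c \<le> f i \<and> f i \<le> d"
  shows "c \<le> (\<Sum>i<n. t i * f i) \<and> (\<Sum>i<n. t i * f i) \<le> d"
proof
  have "c = (\<Sum>i<n. t i * c)" using assms(2) by (simp add: sum_distrib_right[symmetric])
  also have "\<dots> \<le> (\<Sum>i<n. t i * f i)" by (rule sum_mono) (use assms in \<open>auto intro: mult_left_mono\<close>)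
  finally show "c \<le> (\<Sum>i<n. t i * f i)" .
  have "(\<Sum>i<n. t i * f i) \<le> (\<Sum>i<n. t i * d)" by (rule sum_mono) (use assms in \<open>auto intro: mult_left_mono\<close>)
  also have "\<dots> = d" using assms(2) by (simp add: sum_distrib_right[symmetric])
  finally show "(\<Sum>i<n. t i * f i) \<le> d" .
qed

lemma theta_bound:
  fixes Nr t' Om a :: real
  assumes "Nr > 0" "\<bar>t'\<bar> / Nr < 1/4 - 1 / (2 * Nr)" "a \<le> Om" "Om \<le> a + 1"
  shows "-1/4 < (Om + t' - a - 1/2) / Nr \<and> (Om + t' - a - 1/2) / Nr < 1/4"
proof -
  have "\<bar>Om + t' - a - 1/2\<bar> \<le> 1/2 + \<bar>t'\<bar>" using assms(3,4) by linarith
  then have "\<bar>Om + t' - a - 1/2\<bar> / Nr \<le> (1/2 + \<bar>t'\<bar>) / Nr" using assms(1) by (simp add: divide_right_mono)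
  also have "\<dots> = 1 / (2 * Nr) + \<bar>t'\<bar> / Nr" using assms(1) by (simp add: field_simps)
  also have "\<dots> < 1/4" using assms(2) by linarith
  finally have "\<bar>(Om + t' - a - 1/2) / Nr\<bar> < 1/4" using assms(1) by simp
  then show ?thesis using abs_less_iff[of "(Om + t' - a - 1/2) / Nr" "1/4"] by linarith
qed

lemma delta_sum_gen: fixes i n :: nat assumes "i < n" "\<forall>k<n. k \<noteq> i \<longrightarrow> g k = 0" shows "(\<Sum>k<n. g k) = g i"
proof -
  have "(\<Sum>k<n. g k) = g i + (\<Sum>k\<in>{..<n} - {i}. g k)" using assms(1) by (intro sum.remove) auto
  also have "(\<Sum>k\<in>{..<n} - {i}. g k) = 0" using assms(2) by (intro sum.neutral) auto
  finally show ?thesis by simp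
qed

lemma delta_sum_real: fixes i n :: nat shows "i < n \<Longrightarrow> (\<Sum>k<n. (if k = i then 1 else 0) * (f k :: real)) = f i"
  using delta_sum_gen[of i n "\<lambda>k. (if k = i then 1 else 0) * f k"] by simp

lemma delta_sum_cpx: fixes i n :: nat shows "i < n \<Longrightarrow> (\<Sum>k<n. complex_of_real (if k = i then 1 else 0) * (f k :: complex)) = f i"
  using delta_sum_gen[of i n "\<lambda>k. complex_of_real (if k = i then 1 else 0) * f k"] by simp

lemma vertex_gsimp: "i < length S \<Longrightarrow> vpt (S ! i) \<in> gsimp S"
  unfolding gsimp_def
  by (intro CollectI exI[of _ "\<lambda>k. if k = i then 1 else 0"]) (auto simp: delta_sum_real)

lemma Hsect_nz: "z \<in> Hsect t \<Longrightarrow> z \<noteq> 0"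
  unfolding Hsect_def by auto

lemma vpt_shift: assumes "length u = m" "lam \<in> int_points m"
  shows "vpt (shiftv lam u) = (\<lambda>l. vpt u l + real_of_int (lam l))"
proof
  fix l
  show "vpt (shiftv lam u) l = vpt u l + real_of_int (lam l)"
  proof (cases "l \<in> {1..m}")
    case True then show ?thesis using assms(1) unfolding vpt_def by (auto simp: nth_shiftv)
  next
    case False
    then have "l = 0 \<or> l > m" by auto
    then have "lam l = 0" using assms(2) unfolding int_points_def by blast
    then show ?thesis using False assms(1) unfolding vpt_def by auto
  qed
qed

lemma vint_shift: assumes "length u = m" "lam \<in> int_points m"
  shows "vint (shiftv lam u) = (\<lambda>l. vint u l + lam l)"
proof
  fix l
  show "vint (shiftv lam u) l = vint u l + lam l"
  proof (cases "l \<in> {1..m}")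
    case True then show ?thesis using assms(1) unfolding vint_def by (auto simp: nth_shiftv)
  next
    case False
    then have "l = 0 \<or> l > m" by auto
    then have "lam l = 0" using assms(2) unfolding int_points_def by blast
    then show ?thesis using False assms(1) unfolding vint_def by auto
  qed
qed

context
  fixes r1 r2 :: nat
    and tau :: "nat \<Rightarrow> 'a::field_char_0 \<Rightarrow> complex"
    and eps :: "nat \<Rightarrow> 'a"
    and N :: "nat \<Rightarrow> nat"
    and beta :: "(nat \<Rightarrow> int) \<Rightarrow> 'a"
    and A :: "(nat \<Rightarrow> real) \<Rightarrow> (nat \<Rightarrow> complex)"
  assumes nf: "number_field_emb r1 r2 tau"
    and units: "\<forall>l\<in>{1..r1+r2-1}. nf_unit (eps l) \<and> totally_positive r1 tau (eps l)"
    and N3: "\<forall>j\<in>{1..r2}. N j \<ge> 3"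
    and tw: "twister r1 r2 tau N beta"
    and A: "admissible_A r1 r2 tau eps N beta A"
begin

lemma R1: "r1 + r2 \<ge> 1" by (rule nf_R1[OF nf])

lemma Mdef: "r1 + 2 * r2 - 1 = (r1 + r2 - 1) + r2" using R1 by simp

lemma Sinv: "S \<in> frakI r1 r2 tau eps N \<Longrightarrow> S \<noteq> [] \<and> sorted_wrt (\<lambda>a b. lexlt b a) S \<and>
   (\<forall>u\<in>set S. length u = r1 + 2 * r2 - 1) \<and> Win (oms r1 r2 tau eps N) (r1 + 2 * r2 - 1) (set S)"
  using Xcx_inv unfolding frakI_def by blast

lemma Aform: "S \<in> frakI r1 r2 tau eps N \<Longrightarrow> \<forall>i<length S. t i \<ge> 0 \<Longrightarrow> (\<Sum>i<length S. t i) = 1 \<Longrightarrow>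
   A (\<lambda>l. \<Sum>i<length S. t i * vpt (S ! i) l) =
   (\<lambda>c. \<Sum>i<length S. complex_of_real (t i) * emb r1 r2 tau (ftilde (r1 + r2 - 1) eps beta (S ! i)) c)"
  using A unfolding admissible_A_def by blast

lemma Avert: "S \<in> frakI r1 r2 tau eps N \<Longrightarrow> i < length S \<Longrightarrow>
   A (vpt (S ! i)) = (\<lambda>c. emb r1 r2 tau (ftilde (r1 + r2 - 1) eps beta (S ! i)) c)"
proof -
  assume S: "S \<in> frakI r1 r2 tau eps N" and i: "i < length S"
  let ?t = "\<lambda>k. if k = i then 1 else (0::real)"
  have "A (\<lambda>l. \<Sum>k<length S. ?t k * vpt (S ! k) l) =
   (\<lambda>c. \<Sum>k<length S. complex_of_real (?t k) * emb r1 r2 tau (ftilde (r1 + r2 - 1) eps beta (S ! k)) c)"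
  proof (rule Aform[OF S])
    show "\<forall>k<length S. 0 \<le> ?t k" by simp
    show "(\<Sum>k<length S. ?t k) = 1" using delta_sum_gen[of i "length S" ?t] i by simp
  qed
  moreover have "(\<lambda>l. \<Sum>k<length S. ?t k * vpt (S ! k) l) = vpt (S ! i)"
    using i by (simp add: delta_sum_real)
  moreover have "(\<lambda>c. \<Sum>k<length S. complex_of_real (?t k) * emb r1 r2 tau (ftilde (r1 + r2 - 1) eps beta (S ! k)) c)
     = (\<lambda>c. emb r1 r2 tau (ftilde (r1 + r2 - 1) eps beta (S ! i)) c)"
    using i by (simp add: delta_sum_cpx)
  ultimately show ?thesis by simp
qed

lemma exists_a:
  assumes S: "S \<in> frakI r1 r2 tau eps N"
  shows "\<exists>a :: nat \<Rightarrow> real. \<forall>j\<in>{1..r2}. \<forall>\<kappa>\<in>gsimp S.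
            a j \<le> Omega r1 r2 tau eps N j \<kappa> \<and> Omega r1 r2 tau eps N j \<kappa> \<le> a j + 1"
proof -
  have inv: "\<forall>u\<in>set S. length u = r1 + 2 * r2 - 1" "Win (oms r1 r2 tau eps N) (r1 + 2 * r2 - 1) (set S)"
    using Sinv[OF S] by auto
  have "\<forall>j\<in>{1..r2}. \<exists>c. \<forall>\<kappa>\<in>gsimp S. c \<le> Omega r1 r2 tau eps N j \<kappa> \<and> Omega r1 r2 tau eps N j \<kappa> \<le> c + 1"
  proof
    fix j assume j: "j \<in> {1..r2}"
    let ?s = "r1 + r2 - 1 + j - 1"
    have "?s < r1 + 2 * r2 - 1" using j R1 by auto
    from Win_window[OF inv(2) this] obtain c where
      c: "\<forall>v\<in>set S. c \<le> ovl (oms r1 r2 tau eps N ?s) (take (Suc ?s) v) \<and> ovl (oms r1 r2 tau eps N ?s) (take (Suc ?s) v) \<le> c + 1"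
      by blast
    have sv: "Suc ?s = r1 + r2 - 1 + j" using j by auto
    have vb: "\<forall>v\<in>set S. c \<le> Omega r1 r2 tau eps N j (vpt v) \<and> Omega r1 r2 tau eps N j (vpt v) \<le> c + 1"
    proof
      fix v assume v: "v \<in> set S"
      have "Omega r1 r2 tau eps N j (vpt v) = ovl (oms r1 r2 tau eps N ?s) (take (Suc ?s) v)"
        unfolding sv by (rule Omega_vertex[OF inv(1)[rule_format, OF v] R1 j])
      then show "c \<le> Omega r1 r2 tau eps N j (vpt v) \<and> Omega r1 r2 tau eps N j (vpt v) \<le> c + 1"
        using c v by simp
    qed
    show "\<exists>c. \<forall>\<kappa>\<in>gsimp S. c \<le> Omega r1 r2 tau eps N j \<kappa> \<and> Omega r1 r2 tau eps N j \<kappa> \<le> c + 1"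
    proof (intro exI ballI)
      fix \<kappa> assume "\<kappa> \<in> gsimp S"
      then obtain t where t: "\<forall>i<length S. t i \<ge> 0" "(\<Sum>i<length S. t i) = 1"
        "\<kappa> = (\<lambda>l. \<Sum>i<length S. t i * vpt (S ! i) l)" unfolding gsimp_def by blast
      have "Omega r1 r2 tau eps N j \<kappa> = (\<Sum>i<length S. t i * Omega r1 r2 tau eps N j (vpt (S ! i)))"
        unfolding t(3) by (rule Omega_lin)
      moreover have "\<forall>i<length S. c \<le> Omega r1 r2 tau eps N j (vpt (S ! i)) \<and> Omega r1 r2 tau eps N j (vpt (S ! i)) \<le> c + 1"
        using vb by auto
      ultimately show "c \<le> Omega r1 r2 tau eps N j \<kappa> \<and> Omega r1 r2 tau eps N j \<kappa> \<le> c + 1"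
        using conv_bounds[OF t(1,2)] by simp
    qed
  qed
  then show ?thesis by (rule bchoice)
qed


lemma epsnz: "\<forall>l\<in>{1..r1+r2-1}. eps l \<noteq> 0"
  using units unfolding nf_unit_def by blast

lemma tpb: "\<forall>x\<in>int_points (r1+r2-1+r2). totally_positive r1 tau (beta x)"
  using tw unfolding twister_def Let_def by (elim conjE)

lemma vint_S: "S \<in> frakI r1 r2 tau eps N \<Longrightarrow> k < length S \<Longrightarrow> vint (S ! k) \<in> int_points (r1+r2-1+r2)"
  using Sinv[of S] vint_int_points[of "S ! k"] Mdef by simp

lemma fmap_form:
  assumes S: "S \<in> frakI r1 r2 tau eps N" and t: "\<forall>i<length S. t i \<ge> 0" "(\<Sum>i<length S. t i) = 1"
  shows "fmap A (\<lambda>l. \<Sum>i<length S. t i * vpt (S ! i) l) y = (\<lambda>c. complex_of_real (exp y) *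
     (\<Sum>i<length S. complex_of_real (t i) * emb r1 r2 tau (ftilde (r1 + r2 - 1) eps beta (S ! i)) c))"
  unfolding fmap_def Aform[OF S t] ..

lemma in_Hcal:
  assumes S: "S \<in> frakI r1 r2 tau eps N"
    and a: "\<forall>j\<in>{1..r2}. \<forall>\<kappa>\<in>gsimp S. a j \<le> Omega r1 r2 tau eps N j \<kappa> \<and> Omega r1 r2 tau eps N j \<kappa> \<le> a j + 1"
    and x: "x \<in> gsimp S"
  shows "fmap A x y \<in> Hcal r1 r2 N a"
proof -
  obtain t where t: "\<forall>i<length S. t i \<ge> 0" "(\<Sum>i<length S. t i) = 1"
    "x = (\<lambda>l. \<Sum>i<length S. t i * vpt (S ! i) l)" using x unfolding gsimp_def by blast
  let ?R = "r1 + r2 - 1"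
  let ?E = "\<lambda>k c. emb r1 r2 tau (ftilde ?R eps beta (S ! k)) c"
  have fm: "fmap A x y = (\<lambda>c. complex_of_real (exp y) * (\<Sum>k<length S. complex_of_real (t k) * ?E k c))"
    unfolding t(3) by (rule fmap_form[OF S t(1,2)])
  have ft: "ftilde ?R eps beta (S ! k) = beta (vint (S ! k)) * eps_pow ?R eps (vint (S ! k))" for k
    unfolding ftilde_def ..
  have c1: "fmap A x y i \<in> \<real> \<and> Re (fmap A x y i) > 0" if i: "i \<in> {1..r1}" for i
  proof -
    have hom: "is_ring_hom_C (tau i)" using nf_hom[OF nf] i by simp
    have "\<forall>k<length S. posr (?E k i)"
    proof (intro allI impI)
      fix k assume k: "k < length S"
      have "?E k i = tau i (ftilde ?R eps beta (S ! k))" using i unfolding emb_def by simp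
      also have "\<dots> = tau i (beta (vint (S ! k)) * eps_pow ?R eps (vint (S ! k)))" unfolding ft ..
      finally show "posr (?E k i)"
        using real_coord[OF hom i tpb[rule_format, OF vint_S[OF S k]]] units by simp
    qed
    then have "posr (complex_of_real (exp y) * (\<Sum>k<length S. complex_of_real (t k) * ?E k i))"
      by (intro real_sum[OF t(1,2)]) auto
    then show ?thesis unfolding fm posr_iff by simp
  qed
  have c2: "fmap A x y (r1 + j) \<in> Hsect ((a j + 1/2) / real (N j))" if j: "j \<in> {1..r2}" for j
  proof -
    have hom: "is_ring_hom_C (tau (r1 + j))" using nf_hom[OF nf] j by simp
    have Nj: "N j \<ge> 3" using N3 j by blast
    have "\<forall>k<length S. \<exists>\<rho>>0. \<exists>\<theta>. -1/4 < \<theta> \<and> \<theta> < 1/4 \<and>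
       ?E k (r1 + j) = complex_of_real \<rho> * exp (2 * complex_of_real pi * \<i> * complex_of_real ((a j + 1/2) / real (N j) + \<theta>))"
    proof (intro allI impI)
      fix k assume k: "k < length S"
      let ?X = "vint (S ! k)"
      have E1: "?E k (r1 + j) = tau (r1 + j) (beta ?X * eps_pow ?R eps ?X)" using j unfolding emb_def ft by simp
      obtain \<rho> t' where rt: "\<rho> > 0" "\<bar>t'\<bar> / real (N j) < 1/4 - 1 / (2 * real (N j))"
        "tau (r1 + j) (beta ?X * eps_pow ?R eps ?X) = complex_of_real \<rho> *
         exp (2 * complex_of_real pi * \<i> * complex_of_real
         ((real_of_int (?X (?R + j)) + real (N j) / (2 * pi) *
            (\<Sum>l\<in>{1..?R}. real_of_int (?X l) * Arg (tau (r1 + j) (eps l))) + t') / real (N j)))"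
        using vertex_angle[OF hom j epsnz tw vint_S[OF S k] Nj] by blast
      have Om: "real_of_int (?X (?R + j)) + real (N j) / (2 * pi) *
            (\<Sum>l\<in>{1..?R}. real_of_int (?X l) * Arg (tau (r1 + j) (eps l))) = Omega r1 r2 tau eps N j (vpt (S ! k))"
        unfolding Omega_def vpt_vint ..
      have ab: "a j \<le> Omega r1 r2 tau eps N j (vpt (S ! k)) \<and> Omega r1 r2 tau eps N j (vpt (S ! k)) \<le> a j + 1"
        using a j vertex_gsimp[OF k] by blast
      have eq: "?E k (r1 + j) = complex_of_real \<rho> * exp (2 * complex_of_real pi * \<i> * complex_of_real
         ((Omega r1 r2 tau eps N j (vpt (S ! k)) + t') / real (N j)))"
        using E1 rt(3)[unfolded Om] by (rule trans)
      let ?th = "(Omega r1 r2 tau eps N j (vpt (S ! k)) + t' - a j - 1/2) / real (N j)"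
      have Np: "real (N j) > 0" using Nj by simp
      have tb: "-1/4 < ?th \<and> ?th < 1/4" using theta_bound[OF Np rt(2)] ab by blast
      have "(Omega r1 r2 tau eps N j (vpt (S ! k)) + t') / real (N j) = (a j + 1/2) / real (N j) + ?th"
        using Np by (simp add: field_simps)
      then show "\<exists>\<rho>>0. \<exists>\<theta>. -1/4 < \<theta> \<and> \<theta> < 1/4 \<and>
       ?E k (r1 + j) = complex_of_real \<rho> * exp (2 * complex_of_real pi * \<i> * complex_of_real ((a j + 1/2) / real (N j) + \<theta>))"
        using eq tb rt(1) by metis
    qed
    then have "complex_of_real (exp y) * (\<Sum>k<length S. complex_of_real (t k) * ?E k (r1 + j)) \<in> Hsect ((a j + 1/2) / real (N j))"
      by (intro sector_sum[OF t(1,2)]) auto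
    then show ?thesis unfolding fm by simp
  qed
  have c3: "fmap A x y i = 0" if "i \<notin> {1..r1+r2}" for i
  proof -
    have e: "emb r1 r2 tau g i = 0" for g using that unfolding emb_def by auto
    show ?thesis unfolding fm e by simp
  qed
  show ?thesis unfolding Hcal_def using c1 c2 c3 by blast
qed


lemma Hcal_nz: "z \<in> Hcal r1 r2 N a \<Longrightarrow> z \<noteq> (\<lambda>_. 0)"
proof
  assume z: "z \<in> Hcal r1 r2 N a" and z0: "z = (\<lambda>_. 0)"
  show False
  proof (cases "r1 \<ge> 1")
    case True
    then have "Re (z 1) > 0" using z unfolding Hcal_def by auto
    then show False using z0 by simp
  next
    case False
    then have "r2 \<ge> 1" using R1 by simp
    have h: "\<forall>j\<in>{1..r2}. z (r1 + j) \<in> Hsect ((a j + 1/2) / real (N j))" using z unfolding Hcal_def by blast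
    have "(1::nat) \<in> {1..r2}" using \<open>r2 \<ge> 1\<close> by simp
    then have "z (r1 + 1) \<in> Hsect ((a 1 + 1/2) / real (N 1))" using h by blast
    then have "z (r1 + 1) \<noteq> 0" by (rule Hsect_nz)
    then show False using z0 by simp
  qed
qed

lemma Hcal_posC: "z \<in> Hcal r1 r2 N a \<Longrightarrow> z \<in> posCstar r1 r2"
  unfolding Hcal_def posCstar_def using Hsect_nz by blast

lemma part_ii:
  assumes S: "S \<in> frakI r1 r2 tau eps N"
  shows "{fmap A x y | x y. x \<in> gsimp S} =
          {(\<lambda>c. \<Sum>i<length S. complex_of_real (t i) * fmap A (vpt (S ! i)) 0 c) | t.
               \<forall>i<length S. t i \<ge> 0} - {(\<lambda>_. 0)}"
proof -
  let ?R = "r1 + r2 - 1"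
  let ?E = "\<lambda>k c. emb r1 r2 tau (ftilde ?R eps beta (S ! k)) c"
  have fv: "fmap A (vpt (S ! i)) 0 = ?E i" if "i < length S" for i
    unfolding fmap_def Avert[OF S that] by simp
  have rhs: "{(\<lambda>c. \<Sum>i<length S. complex_of_real (t i) * fmap A (vpt (S ! i)) 0 c) | t.
               \<forall>i<length S. t i \<ge> 0} = {(\<lambda>c. \<Sum>i<length S. complex_of_real (t i) * ?E i c) | t.
               \<forall>i<length S. t i \<ge> 0}"
  proof -
    have "(\<lambda>c. \<Sum>i<length S. complex_of_real (t i) * fmap A (vpt (S ! i)) 0 c) =
          (\<lambda>c. \<Sum>i<length S. complex_of_real (t i) * ?E i c)" for t
      using fv by (intro ext sum.cong) auto
    then show ?thesis by simp
  qed
  obtain a where a: "\<forall>j\<in>{1..r2}. \<forall>\<kappa>\<in>gsimp S. a j \<le> Omega r1 r2 tau eps N j \<kappa> \<and> Omega r1 r2 tau eps N j \<kappa> \<le> a j + 1"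
    using exists_a[OF S] by blast
  show ?thesis unfolding rhs
  proof (intro equalityI subsetI)
    fix F assume "F \<in> {fmap A x y | x y. x \<in> gsimp S}"
    then obtain x y where xy: "F = fmap A x y" "x \<in> gsimp S" by blast
    then obtain t where t: "\<forall>i<length S. t i \<ge> 0" "(\<Sum>i<length S. t i) = 1"
      "x = (\<lambda>l. \<Sum>i<length S. t i * vpt (S ! i) l)" unfolding gsimp_def by blast
    have "F = (\<lambda>c. complex_of_real (exp y) * (\<Sum>k<length S. complex_of_real (t k) * ?E k c))"
      unfolding xy(1) t(3) by (rule fmap_form[OF S t(1,2)])
    also have "\<dots> = (\<lambda>c. \<Sum>k<length S. complex_of_real (exp y * t k) * ?E k c)"
      by (simp add: sum_distrib_left mult.assoc)
    finally have "F = (\<lambda>c. \<Sum>k<length S. complex_of_real (exp y * t k) * ?E k c)" .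
    moreover have "\<forall>i<length S. exp y * t i \<ge> 0" using t(1) by simp
    moreover have "F \<noteq> (\<lambda>_. 0)" using Hcal_nz[OF in_Hcal[OF S a xy(2)]] xy(1) by simp
    ultimately show "F \<in> {(\<lambda>c. \<Sum>i<length S. complex_of_real (t i) * ?E i c) | t.
               \<forall>i<length S. t i \<ge> 0} - {(\<lambda>_. 0)}"
      by (intro DiffI CollectI exI[of _ "\<lambda>k. exp y * t k"] conjI) auto
  next
    fix F assume "F \<in> {(\<lambda>c. \<Sum>i<length S. complex_of_real (t i) * ?E i c) | t.
               \<forall>i<length S. t i \<ge> 0} - {(\<lambda>_. 0)}"
    then obtain t where t: "\<forall>i<length S. t i \<ge> 0" "F = (\<lambda>c. \<Sum>i<length S. complex_of_real (t i) * ?E i c)"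
      and F0: "F \<noteq> (\<lambda>_. 0)" by blast
    let ?s = "\<Sum>i<length S. t i"
    have "?s \<noteq> 0"
    proof
      assume "?s = 0"
      then have "\<forall>i<length S. t i = 0" using sum_nonneg_eq_0_iff[of "{..<length S}" t] t(1) by simp
      then have "F = (\<lambda>_. 0)" using t(2) by simp
      then show False using F0 by simp
    qed
    then have sp: "?s > 0" using t(1) sum_nonneg[of "{..<length S}" t] by simp
    let ?t = "\<lambda>i. t i / ?s"
    have t1: "\<forall>i<length S. ?t i \<ge> 0" using t(1) sp by simp
    have t2: "(\<Sum>i<length S. ?t i) = 1" using sp by (simp add: sum_divide_distrib[symmetric])
    let ?x = "\<lambda>l. \<Sum>i<length S. ?t i * vpt (S ! i) l"
    have xin: "?x \<in> gsimp S" unfolding gsimp_def using t1 t2 by (intro CollectI exI[of _ ?t]) simp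
    have "fmap A ?x (ln ?s) = (\<lambda>c. complex_of_real (exp (ln ?s)) * (\<Sum>k<length S. complex_of_real (?t k) * ?E k c))"
      by (rule fmap_form[OF S t1 t2])
    also have "\<dots> = F"
    proof -
      have el: "exp (ln ?s) = ?s" using sp by simp
      have pt: "complex_of_real ?s * (complex_of_real (?t k) * ?E k c) = complex_of_real (t k) * ?E k c" for k c
      proof -
        have "?s * ?t k = t k" using sp by simp
        then have "complex_of_real ?s * complex_of_real (?t k) = complex_of_real (t k)"
          by (metis of_real_mult)
        then show ?thesis by (metis mult.assoc)
      qed
      show ?thesis unfolding t(2) el
        by (rule ext) (simp only: sum_distrib_left pt)
    qed
    finally have "fmap A ?x (ln ?s) = F" .
    then show "F \<in> {fmap A x y | x y. x \<in> gsimp S}" using xin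
      by (intro CollectI exI[of _ ?x] exI[of _ "ln ?s"]) auto
  qed
qed


lemma sum_supp_eq:
  assumes "finite P" "finite Q" "\<forall>v. f v \<noteq> 0 \<longrightarrow> v \<in> P \<inter> Q"
  shows "sum f P = (sum f Q :: complex)"
proof -
  have "sum f P = sum f (P \<inter> Q)" by (rule sum.mono_neutral_right) (use assms in auto)
  also have "\<dots> = sum f Q" by (rule sum.mono_neutral_left) (use assms in auto)
  finally show ?thesis .
qed

lemma emb_mult: "emb r1 r2 tau (g * h) c = emb r1 r2 tau g c * emb r1 r2 tau h c"
proof (cases "c \<in> {1..r1+r2}")
  case True then show ?thesis unfolding emb_def using hom_mult[OF nf_hom[OF nf True]] by simp
next
  case False then show ?thesis unfolding emb_def by auto
qed

lemma ftilde_shift: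
  assumes v: "length v = r1 + 2 * r2 - 1" and lam: "lam \<in> Lattice (r1+r2-1) r2 N"
  shows "ftilde (r1 + r2 - 1) eps beta (shiftv lam v) = eps_pow (r1+r2-1) eps lam * ftilde (r1 + r2 - 1) eps beta v"
proof -
  let ?R = "r1 + r2 - 1"
  have lamI: "lam \<in> int_points (?R + r2)" using lam unfolding Lattice_def by simp
  have vi: "vint (shiftv lam v) = (\<lambda>l. vint v l + lam l)" using vint_shift[OF _ lamI] v Mdef by simp
  have vI: "vint v \<in> int_points (?R + r2)" using vint_int_points[of v] v Mdef by simp
  have per: "beta (\<lambda>l. vint v l + lam l) = beta (vint v)"
    using tw vI lam unfolding twister_def Let_def by blast
  show ?thesis unfolding ftilde_def vi per eps_pow_add[OF epsnz] by (simp add: algebra_simps)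
qed

lemma part_iii:
  assumes x: "x \<in> frakX r1 r2 tau eps N" and x': "x' \<in> frakX r1 r2 tau eps N"
    and lam: "lam \<in> Lattice (r1+r2-1) r2 N" and xx: "x' = (\<lambda>l. x l + real_of_int (lam l))"
  shows "fmap A x' y = (\<lambda>c. emb r1 r2 tau (eps_pow (r1+r2-1) eps lam) c * fmap A x y c)"
proof -
  let ?R = "r1 + r2 - 1"
  let ?M = "r1 + 2 * r2 - 1"
  obtain S where S: "S \<in> frakI r1 r2 tau eps N" "x \<in> gsimp S" using x unfolding frakX_def by blast
  obtain S' where S': "S' \<in> frakI r1 r2 tau eps N" "x' \<in> gsimp S'" using x' unfolding frakX_def by blast
  obtain t where t: "\<forall>i<length S. t i \<ge> 0" "(\<Sum>i<length S. t i) = 1"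
    "x = (\<lambda>l. \<Sum>i<length S. t i * vpt (S ! i) l)" using S(2) unfolding gsimp_def by blast
  obtain t' where t': "\<forall>i<length S'. t' i \<ge> 0" "(\<Sum>i<length S'. t' i) = 1"
    "x' = (\<lambda>l. \<Sum>i<length S'. t' i * vpt (S' ! i) l)" using S'(2) unfolding gsimp_def by blast
  have lamI: "lam \<in> int_points ?M" using lam Mdef unfolding Lattice_def by simp
  have lenS: "\<forall>u\<in>set S. length u = ?M" using Sinv[OF S(1)] by blast
  define L where "L = map (shiftv lam) S"
  have lenL: "length L = length S" unfolding L_def by simp
  have Li: "i < length S \<Longrightarrow> L ! i = shiftv lam (S ! i)" for i unfolding L_def by simp
  have vL: "i < length S \<Longrightarrow> vpt (L ! i) = (\<lambda>l. vpt (S ! i) l + real_of_int (lam l))" for i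
    using Li vpt_shift[OF _ lamI] lenS by simp
  have x'L: "x' = (\<lambda>l. \<Sum>i<length L. t i * vpt (L ! i) l)"
  proof
    fix l
    have "(\<Sum>i<length L. t i * vpt (L ! i) l) = (\<Sum>i<length S. t i * vpt (S ! i) l + t i * real_of_int (lam l))"
      unfolding lenL by (rule sum.cong) (auto simp: vL algebra_simps)
    also have "\<dots> = x l + real_of_int (lam l)" unfolding t(3) using t(2)
      by (simp add: sum.distrib sum_distrib_right[symmetric])
    finally show "x' l = (\<Sum>i<length L. t i * vpt (L ! i) l)" unfolding xx by simp
  qed
  have rep1: "rep (set L) (lw L t) x'" unfolding x'L by (rule lw_rep) (use t lenL in auto)
  have rep2: "rep (set S') (lw S' t') x'" unfolding t'(3) by (rule lw_rep[OF t'(1,2)])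
  have W1: "Win (oms r1 r2 tau eps N) ?M (set L)"
  proof -
    have "Win (oms r1 r2 tau eps N) ?M (shiftv lam ` set S)"
      by (rule Win_shiftv) (use Sinv[OF S(1)] oms_shift in auto)
    then show ?thesis unfolding L_def by simp
  qed
  have W2: "Win (oms r1 r2 tau eps N) ?M (set S')" using Sinv[OF S'(1)] by blast
  have weq: "lw L t = lw S' t'" by (rule Win_unique[OF W1 W2 rep1 rep2])
  have supL: "\<forall>v. lw L t v \<noteq> 0 \<longrightarrow> v \<in> set L" using rep1 unfolding rep_def by blast
  have supS': "\<forall>v. lw S' t' v \<noteq> 0 \<longrightarrow> v \<in> set S'" using rep2 unfolding rep_def by blast
  let ?G = "\<lambda>c v. emb r1 r2 tau (ftilde ?R eps beta v) c"
  have Ax': "A x' c = (\<Sum>i<length S'. complex_of_real (t' i) * ?G c (S' ! i))" for c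
    unfolding t'(3) Aform[OF S'(1) t'(1,2)] ..
  have Ax: "A x c = (\<Sum>i<length S. complex_of_real (t i) * ?G c (S ! i))" for c
    unfolding t(3) Aform[OF S(1) t(1,2)] ..
  have key: "A x' c = emb r1 r2 tau (eps_pow ?R eps lam) c * A x c" for c
  proof -
    have "A x' c = (\<Sum>v\<in>set S'. complex_of_real (lw S' t' v) * ?G c v)"
      unfolding Ax' by (rule list_sum_cpx[symmetric])
    also have "\<dots> = (\<Sum>v\<in>set L. complex_of_real (lw L t v) * ?G c v)"
      unfolding weq by (rule sum_supp_eq) (use supS' supL weq in auto)
    also have "\<dots> = (\<Sum>i<length L. complex_of_real (t i) * ?G c (L ! i))"
      by (rule list_sum_cpx)
    also have "\<dots> = (\<Sum>i<length S. complex_of_real (t i) * (emb r1 r2 tau (eps_pow ?R eps lam) c * ?G c (S ! i)))"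
      unfolding lenL
    proof (rule sum.cong[OF refl])
      fix i assume "i \<in> {..<length S}"
      then have i: "i < length S" by simp
      have "?G c (L ! i) = emb r1 r2 tau (eps_pow ?R eps lam) c * ?G c (S ! i)"
        unfolding Li[OF i] ftilde_shift[OF lenS[rule_format, OF nth_mem[OF i]] lam] emb_mult ..
      then show "complex_of_real (t i) * ?G c (L ! i) = complex_of_real (t i) * (emb r1 r2 tau (eps_pow ?R eps lam) c * ?G c (S ! i))"
        by simp
    qed
    also have "\<dots> = emb r1 r2 tau (eps_pow ?R eps lam) c * A x c"
      unfolding Ax by (simp add: sum_distrib_left algebra_simps)
    finally show ?thesis .
  qed
  show ?thesis unfolding fmap_def using key by (simp add: algebra_simps)
qed

end


theorem lemma9:
  fixes r1 r2 :: nat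
    and tau :: "nat \<Rightarrow> 'a::field_char_0 \<Rightarrow> complex"
    and eps :: "nat \<Rightarrow> 'a"
    and N :: "nat \<Rightarrow> nat"
    and beta :: "(nat \<Rightarrow> int) \<Rightarrow> 'a"
    and A :: "(nat \<Rightarrow> real) \<Rightarrow> (nat \<Rightarrow> complex)"
  assumes nf: "number_field_emb r1 r2 tau"
    and units: "\<forall>l\<in>{1..r1+r2-1}. nf_unit (eps l) \<and> totally_positive r1 tau (eps l)"
    and indep: "\<forall>e :: nat \<Rightarrow> int. eps_pow (r1+r2-1) eps e = 1 \<longrightarrow> (\<forall>l\<in>{1..r1+r2-1}. e l = 0)"
    and N3: "\<forall>j\<in>{1..r2}. N j \<ge> 3"
    and tw: "twister r1 r2 tau N beta"
    and A: "admissible_A r1 r2 tau eps N beta A"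
  shows
    \<comment> \<open>(i)\<close>
    "(\<forall>S\<in>frakI r1 r2 tau eps N.
        (\<exists>a :: nat \<Rightarrow> real. \<forall>j\<in>{1..r2}. \<forall>\<kappa>\<in>gsimp S.
            a j \<le> Omega r1 r2 tau eps N j \<kappa> \<and> Omega r1 r2 tau eps N j \<kappa> \<le> a j + 1) \<and>
        (\<forall>a :: nat \<Rightarrow> real. (\<forall>j\<in>{1..r2}. \<forall>\<kappa>\<in>gsimp S.
            a j \<le> Omega r1 r2 tau eps N j \<kappa> \<and> Omega r1 r2 tau eps N j \<kappa> \<le> a j + 1) \<longrightarrow>
          {fmap A x y | x y. x \<in> gsimp S} \<subseteq> Hcal r1 r2 N a))
     \<and> {fmap A x y | x y. x \<in> frakX r1 r2 tau eps N} \<subseteq> posCstar r1 r2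
     \<comment> \<open>(ii)\<close>
     \<and> (\<forall>S\<in>frakI r1 r2 tau eps N.
          {fmap A x y | x y. x \<in> gsimp S} =
          {(\<lambda>c. \<Sum>i<length S. complex_of_real (t i) * fmap A (vpt (S ! i)) 0 c) | t.
               \<forall>i<length S. t i \<ge> 0} - {(\<lambda>_. 0)})
     \<comment> \<open>(iii)\<close>
     \<and> (\<forall>x\<in>frakX r1 r2 tau eps N. \<forall>x'\<in>frakX r1 r2 tau eps N. \<forall>lam\<in>Lattice (r1+r2-1) r2 N. \<forall>y::real.
          x' = (\<lambda>l. x l + real_of_int (lam l)) \<longrightarrow>
          fmap A x' y = (\<lambda>c. emb r1 r2 tau (eps_pow (r1+r2-1) eps lam) c * fmap A x y c))"
proof -
  note ctx = nf units N3 tw A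
  have i1: "\<forall>S\<in>frakI r1 r2 tau eps N.
        (\<exists>a :: nat \<Rightarrow> real. \<forall>j\<in>{1..r2}. \<forall>\<kappa>\<in>gsimp S.
            a j \<le> Omega r1 r2 tau eps N j \<kappa> \<and> Omega r1 r2 tau eps N j \<kappa> \<le> a j + 1) \<and>
        (\<forall>a :: nat \<Rightarrow> real. (\<forall>j\<in>{1..r2}. \<forall>\<kappa>\<in>gsimp S.
            a j \<le> Omega r1 r2 tau eps N j \<kappa> \<and> Omega r1 r2 tau eps N j \<kappa> \<le> a j + 1) \<longrightarrow>
          {fmap A x y | x y. x \<in> gsimp S} \<subseteq> Hcal r1 r2 N a)"
  proof (intro ballI conjI allI impI subsetI)
    fix S assume S: "S \<in> frakI r1 r2 tau eps N"
    show "\<exists>a :: nat \<Rightarrow> real. \<forall>j\<in>{1..r2}. \<forall>\<kappa>\<in>gsimp S.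
            a j \<le> Omega r1 r2 tau eps N j \<kappa> \<and> Omega r1 r2 tau eps N j \<kappa> \<le> a j + 1"
      by (rule exists_a[OF ctx S])
    fix a :: "nat \<Rightarrow> real" and z
    assume a: "\<forall>j\<in>{1..r2}. \<forall>\<kappa>\<in>gsimp S.
            a j \<le> Omega r1 r2 tau eps N j \<kappa> \<and> Omega r1 r2 tau eps N j \<kappa> \<le> a j + 1"
      and z: "z \<in> {fmap A x y | x y. x \<in> gsimp S}"
    then obtain x y where "z = fmap A x y" "x \<in> gsimp S" by blast
    then show "z \<in> Hcal r1 r2 N a" using in_Hcal[OF ctx S a] by blast
  qed
  have i2: "{fmap A x y | x y. x \<in> frakX r1 r2 tau eps N} \<subseteq> posCstar r1 r2"
  proof
    fix z assume "z \<in> {fmap A x y | x y. x \<in> frakX r1 r2 tau eps N}"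
    then obtain x y where xy: "z = fmap A x y" "x \<in> frakX r1 r2 tau eps N" by blast
    then obtain S where S: "S \<in> frakI r1 r2 tau eps N" "x \<in> gsimp S" unfolding frakX_def by blast
    obtain a where a: "\<forall>j\<in>{1..r2}. \<forall>\<kappa>\<in>gsimp S.
            a j \<le> Omega r1 r2 tau eps N j \<kappa> \<and> Omega r1 r2 tau eps N j \<kappa> \<le> a j + 1"
      using exists_a[OF ctx S(1)] by blast
    show "z \<in> posCstar r1 r2" unfolding xy(1)
      by (rule Hcal_posC[OF ctx in_Hcal[OF ctx S(1) a S(2)]])
  qed
  have ii: "\<forall>S\<in>frakI r1 r2 tau eps N.
          {fmap A x y | x y. x \<in> gsimp S} =
          {(\<lambda>c. \<Sum>i<length S. complex_of_real (t i) * fmap A (vpt (S ! i)) 0 c) | t.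
               \<forall>i<length S. t i \<ge> 0} - {(\<lambda>_. 0)}"
    using part_ii[OF ctx] by blast
  have iii: "\<forall>x\<in>frakX r1 r2 tau eps N. \<forall>x'\<in>frakX r1 r2 tau eps N. \<forall>lam\<in>Lattice (r1+r2-1) r2 N. \<forall>y::real.
          x' = (\<lambda>l. x l + real_of_int (lam l)) \<longrightarrow>
          fmap A x' y = (\<lambda>c. emb r1 r2 tau (eps_pow (r1+r2-1) eps lam) c * fmap A x y c)"
    using part_iii[OF ctx] by blast
  show ?thesis using i1 i2 ii iii by blast
qed


end
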